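(* Let $D_i,a_i,\lambda_i>0$ and $n_i\in[1,2]$ for $i\in\{1,2\}$. Then there exists $C>0$ such that whenever $\chi_1>0$, $\chi_2>0$ and (IE) holds, for all $\varepsilon\in(0,1)$ the functions $$\mathcal{F}_\varepsilon(t):=\int_\Omega u_\varepsilon\ln u_\varepsilon-\int_\Omega u_\varepsilon+\frac{\varepsilon}{(3-n_1)(4-n_1)}\int_\Omega\frac{1}{u_\varepsilon^{3-n_1}}+\frac{\chi_1}{\chi_2}\int_\Omega v_\varepsilon\ln v_\varepsilon-\frac{\chi_1}{\chi_2}\int_\Omega v_\varepsilon+\frac{\chi_1\varepsilon}{(3-n_2)(4-n_2)\chi_2}\int_\Omega\frac{1}{v_\varepsilon^{3-n_2}},\quad t\ge0,$$ $$\mathcal{D}_\varepsilon(t):=\frac{D_1}{2}\int_\Omega\frac{u_{\varepsilon x}^2}{u_\varepsilon}+\varepsilon\int_\Omega u_\varepsilon^{n_1-1}u_{\varepsilon xx}^2+D_1\varepsilon\int_\Omega\frac{u_{\varepsilon x}^2}{u_\varepsilon^{5-n_1}}+\frac{\chi_1D_2}{2\chi_2}\int_\Omega\frac{v_{\varepsilon x}^2}{v_\varepsilon}+\frac{\chi_1\varepsilon}{\chi_2}\int_\Omega v_\varepsilon^{n_2-1}v_{\varepsilon xx}^2+\frac{\chi_1D_2\varepsilon}{\chi_2}\int_\Omega\frac{v_{\varepsilon x}^2}{v_\varepsilon^{5-n_2}},\quad t>0,$$ (all integrands evaluated at $(\cdot,t)$) satisfy $$\frac{d}{dt}\mathcal{F}_\varepsilon(t)+\mathcal{D}_\varepsilon(t)\le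 C\Big(1+\frac{\chi_1}{\chi_2}\Big)\Big\{1+\Big(\int_\Omega u_\varepsilon(\cdot,t)\Big)^7+\Big(\int_\Omega v_\varepsilon(\cdot,t)\Big)^7\Big\}\qquad\text{for all }t>0.$$
   Context: Let $\Omega\subset\mathbb{R}$ be a bounded open interval and fix $\alpha\in(0,\frac12]$. Assumption (IE): $u_0,v_0\in W^{1,2}(\Omega)$ with $u_0>0,v_0>0$ in $\overline\Omega$; for each $\varepsilon\in(0,1)$, $u_{0\varepsilon},v_{0\varepsilon}\in C^5(\overline\Omega)$ with $u_{0\varepsilon x}=u_{0\varepsilon xxx}=v_{0\varepsilon x}=v_{0\varepsilon xxx}=0$ on $\partial\Omega$; $\frac12\inf_\Omega u_0\le u_{0\varepsilon}\le u_0+1$, $\frac12\inf_\Omega v_0\le v_{0\varepsilon}\le v_0+1$ in $\Omega$; $\int_\Omega u_{0\varepsilon x}^2\le\int_\Omega u_{0x}^2+1$, $\int_\Omega v_{0\varepsilon x}^2\le\int_\Omega v_{0x}^2+1$; $u_{0\varepsilon}\to u_0$, $v_{0\varepsilon}\to v_0$ a.e. as $\varepsilon\searrow0$. $(u_\varepsilon,v_\varepsilon)$ is the global classical solution, positive in $\overline\Omega\times[0,\infty)$ and in $C^{4,1}(\overline\Omega\times(0,\infty))\cap\bigcap_{s\in(3/2,2)}C^0([0,\infty);W^{s,2}(\Omega))$, of the approximating problem $u_t=-\varepsilon\big(\frac{u^4}{u^{4-n_1}+\varepsilon}u_{xxx}\big)_x+\varepsilon^{\alpha/2}(u^{-\alpha}u_x)_x+D_1u_{xx}-\chi_1\big(\frac{u^{5-n_1}}{u^{4-n_1}+\varepsilon}v_x\big)_x+\frac{3u^3}{3u^2+\varepsilon}(\lambda_1-u+a_1v)$,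 $v_t=-\varepsilon\big(\frac{v^4}{v^{4-n_2}+\varepsilon}v_{xxx}\big)_x+\varepsilon^{\alpha/2}(v^{-\alpha}v_x)_x+D_2v_{xx}+\chi_2\big(\frac{v^{5-n_2}}{v^{4-n_2}+\varepsilon}u_x\big)_x+\frac{3v^3}{3v^2+\varepsilon}(\lambda_2-v-a_2u)$ in $\Omega\times(0,\infty)$, $u_x=v_x=u_{xxx}=v_{xxx}=0$ on $\partial\Omega$, $u(\cdot,0)=u_{0\varepsilon}$, $v(\cdot,0)=v_{0\varepsilon}$ (this solution exists globally for $n_1,n_2\in[1,2]$). *)

theory Defs
  imports "HOL-Analysis.Analysis"
begin

text \<open>The domain is the open interval Omega = (p,q) with p < q; its closure is {p..q}.
  Spatial derivatives (one-sided at the endpoints) are taken within the closed interval.\<close>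

definition dx1 :: "real \<Rightarrow> real \<Rightarrow> (real \<Rightarrow> real) \<Rightarrow> real \<Rightarrow> real" where
  "dx1 p q f x = vector_derivative f (at x within {p..q})"

definition Ck_on :: "nat \<Rightarrow> real \<Rightarrow> real \<Rightarrow> (real \<Rightarrow> real) \<Rightarrow> bool" where
  "Ck_on k p q f \<longleftrightarrow>
     (\<forall>j<k. \<forall>x\<in>{p..q}. (((dx1 p q ^^ j) f) has_real_derivative ((dx1 p q ^^ Suc j) f x))
                            (at x within {p..q})) \<and>
     (\<forall>j\<le>k. continuous_on {p..q} ((dx1 p q ^^ j) f))"

definition pdx :: "real \<Rightarrow> real \<Rightarrow> (real \<Rightarrow> real \<Rightarrow> real) \<Rightarrow> real \<Rightarrow> real \<Rightarrow> real" where
  "pdx p q w x t = vector_derivative (\<lambda>y. w y t) (at x within {p..q})"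

definition pdt :: "(real \<Rightarrow> real \<Rightarrow> real) \<Rightarrow> real \<Rightarrow> real \<Rightarrow> real" where
  "pdt w x t = deriv (\<lambda>s. w x s) t"

definition C41_on :: "real \<Rightarrow> real \<Rightarrow> (real \<Rightarrow> real \<Rightarrow> real) \<Rightarrow> bool" where
  "C41_on p q w \<longleftrightarrow>
     (\<forall>k<4. \<forall>x\<in>{p..q}. \<forall>t>0.
        ((\<lambda>y. (pdx p q ^^ k) w y t) has_real_derivative ((pdx p q ^^ Suc k) w x t))
          (at x within {p..q})) \<and>
     (\<forall>k\<le>4. continuous_on ({p..q} \<times> {0<..}) (\<lambda>(x,t). (pdx p q ^^ k) w x t)) \<and>
     (\<forall>x\<in>{p..q}. \<forall>t>0. ((\<lambda>s. w x s) has_real_derivative pdt w x t) (at t)) \<and>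
     continuous_on ({p..q} \<times> {0<..}) (\<lambda>(x,t). pdt w x t)"

text \<open>Membership in W^{1,2}(Omega) (continuous representative), with weak derivative g.\<close>
definition W12_deriv :: "real \<Rightarrow> real \<Rightarrow> (real \<Rightarrow> real) \<Rightarrow> (real \<Rightarrow> real) \<Rightarrow> bool" where
  "W12_deriv p q f g \<longleftrightarrow>
     g integrable_on {p..q} \<and> (\<lambda>x. (g x)\<^sup>2) integrable_on {p..q} \<and>
     (\<forall>x\<in>{p..q}. f x = f p + integral {p..x} g)"

text \<open>Assumption (IE) for one component (u or v); the family is indexed by epsilon.\<close>
definition IE_comp :: "real \<Rightarrow> real \<Rightarrow> (real \<Rightarrow> real) \<Rightarrow> (real \<Rightarrow> real \<Rightarrow> real) \<Rightarrow> bool" where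
  "IE_comp p q w0 w0e \<longleftrightarrow>
     (\<exists>g. W12_deriv p q w0 g \<and>
        (\<forall>x\<in>{p..q}. w0 x > 0) \<and>
        (\<forall>\<epsilon>\<in>{0<..<1}.
           Ck_on 5 p q (w0e \<epsilon>) \<and>
           dx1 p q (w0e \<epsilon>) p = 0 \<and> dx1 p q (w0e \<epsilon>) q = 0 \<and>
           (dx1 p q ^^ 3) (w0e \<epsilon>) p = 0 \<and> (dx1 p q ^^ 3) (w0e \<epsilon>) q = 0 \<and>
           (\<forall>x\<in>{p<..<q}. Inf (w0 ` {p<..<q}) / 2 \<le> w0e \<epsilon> x \<and> w0e \<epsilon> x \<le> w0 x + 1) \<and>
           integral {p..q} (\<lambda>x. (dx1 p q (w0e \<epsilon>) x)\<^sup>2)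
             \<le> integral {p..q} (\<lambda>x. (g x)\<^sup>2) + 1) \<and>
        (AE x in lborel. x \<in> {p<..<q} \<longrightarrow>
            ((\<lambda>\<epsilon>. w0e \<epsilon> x) \<longlongrightarrow> w0 x) (at_right 0)))"

definition approx_sol ::
  "real \<Rightarrow> real \<Rightarrow> real \<Rightarrow> real \<Rightarrow> real \<Rightarrow> real \<Rightarrow> real \<Rightarrow> real \<Rightarrow> real \<Rightarrow> real \<Rightarrow> real
   \<Rightarrow> real \<Rightarrow> real \<Rightarrow> real \<Rightarrow> (real \<Rightarrow> real) \<Rightarrow> (real \<Rightarrow> real)
   \<Rightarrow> (real \<Rightarrow> real \<Rightarrow> real) \<Rightarrow> (real \<Rightarrow> real \<Rightarrow> real) \<Rightarrow> bool" where
  "approx_sol p q \<alpha> D1 D2 \<chi>1 \<chi>2 lam1 lam2 a1 a2 n1 n2 \<epsilon> u0 v0 u v \<longleftrightarrow>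
     continuous_on ({p..q} \<times> {0..}) (\<lambda>(x,t). u x t) \<and>
     continuous_on ({p..q} \<times> {0..}) (\<lambda>(x,t). v x t) \<and>
     (\<forall>x\<in>{p..q}. \<forall>t\<ge>0. u x t > 0 \<and> v x t > 0) \<and>
     C41_on p q u \<and> C41_on p q v \<and>
     (\<forall>x\<in>{p<..<q}. \<forall>t>0.
        ((\<lambda>y. - \<epsilon> * (u y t ^ 4 / (u y t powr (4 - n1) + \<epsilon>)) * (pdx p q ^^ 3) u y t
              + \<epsilon> powr (\<alpha>/2) * u y t powr (-\<alpha>) * pdx p q u y t
              + D1 * pdx p q u y t
              - \<chi>1 * (u y t powr (5 - n1) / (u y t powr (4 - n1) + \<epsilon>)) * pdx p q v y t)
          has_real_derivative
           (pdt u x t - 3 * u x t ^ 3 / (3 * u x t ^ 2 + \<epsilon>) * (lam1 - u x t + a1 * v x t)))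
          (at x)) \<and>
     (\<forall>x\<in>{p<..<q}. \<forall>t>0.
        ((\<lambda>y. - \<epsilon> * (v y t ^ 4 / (v y t powr (4 - n2) + \<epsilon>)) * (pdx p q ^^ 3) v y t
              + \<epsilon> powr (\<alpha>/2) * v y t powr (-\<alpha>) * pdx p q v y t
              + D2 * pdx p q v y t
              + \<chi>2 * (v y t powr (5 - n2) / (v y t powr (4 - n2) + \<epsilon>)) * pdx p q u y t)
          has_real_derivative
           (pdt v x t - 3 * v x t ^ 3 / (3 * v x t ^ 2 + \<epsilon>) * (lam2 - v x t - a2 * u x t)))
          (at x)) \<and>
     (\<forall>t>0. \<forall>x\<in>{p,q}. pdx p q u x t = 0 \<and> pdx p q v x t = 0 \<and>
                         (pdx p q ^^ 3) u x t = 0 \<and> (pdx p q ^^ 3) v x t = 0) \<and>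
     (\<forall>x\<in>{p..q}. u x 0 = u0 x \<and> v x 0 = v0 x)"

definition energyF ::
  "real \<Rightarrow> real \<Rightarrow> real \<Rightarrow> real \<Rightarrow> real \<Rightarrow> real \<Rightarrow> real
   \<Rightarrow> (real \<Rightarrow> real \<Rightarrow> real) \<Rightarrow> (real \<Rightarrow> real \<Rightarrow> real) \<Rightarrow> real \<Rightarrow> real" where
  "energyF p q \<chi>1 \<chi>2 n1 n2 \<epsilon> u v t =
      integral {p..q} (\<lambda>x. u x t * ln (u x t)) - integral {p..q} (\<lambda>x. u x t)
    + \<epsilon> / ((3 - n1) * (4 - n1)) * integral {p..q} (\<lambda>x. 1 / u x t powr (3 - n1))
    + \<chi>1 / \<chi>2 * integral {p..q} (\<lambda>x. v x t * ln (v x t))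
    - \<chi>1 / \<chi>2 * integral {p..q} (\<lambda>x. v x t)
    + \<chi>1 * \<epsilon> / ((3 - n2) * (4 - n2) * \<chi>2) * integral {p..q} (\<lambda>x. 1 / v x t powr (3 - n2))"

definition dissD ::
  "real \<Rightarrow> real \<Rightarrow> real \<Rightarrow> real \<Rightarrow> real \<Rightarrow> real \<Rightarrow> real \<Rightarrow> real \<Rightarrow> real
   \<Rightarrow> (real \<Rightarrow> real \<Rightarrow> real) \<Rightarrow> (real \<Rightarrow> real \<Rightarrow> real) \<Rightarrow> real \<Rightarrow> real" where
  "dissD p q D1 D2 \<chi>1 \<chi>2 n1 n2 \<epsilon> u v t =
      D1 / 2 * integral {p..q} (\<lambda>x. (pdx p q u x t)\<^sup>2 / u x t)
    + \<epsilon> * integral {p..q} (\<lambda>x. u x t powr (n1 - 1) * ((pdx p q ^^ 2) u x t)\<^sup>2)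
    + D1 * \<epsilon> * integral {p..q} (\<lambda>x. (pdx p q u x t)\<^sup>2 / u x t powr (5 - n1))
    + \<chi>1 * D2 / (2 * \<chi>2) * integral {p..q} (\<lambda>x. (pdx p q v x t)\<^sup>2 / v x t)
    + \<chi>1 * \<epsilon> / \<chi>2 * integral {p..q} (\<lambda>x. v x t powr (n2 - 1) * ((pdx p q ^^ 2) v x t)\<^sup>2)
    + \<chi>1 * D2 * \<epsilon> / \<chi>2 * integral {p..q} (\<lambda>x. (pdx p q v x t)\<^sup>2 / v x t powr (5 - n2))"

end

theory Submission
  imports Defs
begin


lemma powr_shift: "0 < (W::real) \<Longrightarrow> a = b + real k \<Longrightarrow> W powr a = W powr b * W ^ k"
  by (simp add: powr_add powr_realpow)

lemma dpow: "W x > 0 \<Longrightarrow> (W has_real_derivative W1) (at x) \<Longrightarrow>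
   ((\<lambda>y. W y powr r) has_real_derivative r * W x powr (r - 1) * W1) (at x)"
  using DERIV_chain2[OF has_real_derivative_powr] by blast

lemma dln: "W x > 0 \<Longrightarrow> (W has_real_derivative W1) (at x) \<Longrightarrow>
   ((\<lambda>y. ln (W y)) has_real_derivative W1 / W x) (at x)"
  using DERIV_chain2[OF DERIV_ln, of W x W1] by (simp add: divide_inverse mult.commute)

lemma alg:
  fixes w w1 w2 w3 wt r z1 n \<epsilon> E A D chi :: real
  assumes w: "w > 0" and eps: "\<epsilon> > 0" and n: "n \<le> 2"
  shows "(w1 / w - \<epsilon> / (4 - n) * ((n - 4) * w powr (n - 4 - 1) * w1)) *
     (- \<epsilon> * (w ^ 4 / (w powr (4 - n) + \<epsilon>)) * w3 + E * A * w1 + D * w1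
      - chi * (w powr (5 - n) / (w powr (4 - n) + \<epsilon>)) * z1)
   + (wt - r) * (ln w - \<epsilon>/(4-n) * w powr (n-4))
   + \<epsilon> * ((n - 1) * w powr (n - 1 - 1) * w1 * w1 * w2 + w powr (n - 1) * w2 * w2 + w powr (n - 1) * w1 * w3 -
          (n - 1) / 3 * ((n - 2) * w powr (n - 2 - 1) * w1 * w1 ^ 3 + w powr (n - 2) * (3 * w1\<^sup>2 * w2)))
   = (ln w - \<epsilon>/(4-n) * w powr (n-4)) * (wt - r)
       + E * A * (1 / w + \<epsilon> * w powr (n-5)) * w1^2
       + D * w1^2 / w + D * \<epsilon> * w1^2 / w powr (5-n) - chi * (w1 * z1)
       + \<epsilon> * (w powr (n-1) * w2^2)
       - \<epsilon> * (n-1) * (n-2) / 3 * (w powr (n-3) * w1^4)"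
proof -
  define P where "P = w powr (n-5)"
  have P: "P > 0" using w by (simp add: P_def)
  have e1: "w powr (n-4-1) = P" by (simp add: P_def)
  have e2: "w powr (n-1-1) = P * w^3" unfolding P_def by (rule powr_shift[OF w]) simp
  have e3: "w powr (n-2-1) = P * w^2" unfolding P_def by (rule powr_shift[OF w]) simp
  have e4: "w powr (n-1) = P * w^4" unfolding P_def by (rule powr_shift[OF w]) simp
  have e5: "w powr (n-2) = P * w^3" unfolding P_def by (rule powr_shift[OF w]) simp
  have e6: "w powr (n-3) = P * w^2" unfolding P_def by (rule powr_shift[OF w]) simp
  have e7: "w powr (n-4) = P * w" unfolding P_def using powr_shift[OF w, of "n-4" "n-5" 1] by simp
  have e8: "w powr (5-n) = 1 / P" unfolding P_def using w by (simp add: powr_minus_divide[symmetric])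
  have e9: "w powr (4-n) = 1 / (P * w)" 
  proof -
    have "w powr (4-n) = inverse (w powr (n-4))" using powr_minus[of w "n-4"] by simp
    then show ?thesis using e7 by (simp add: divide_inverse mult.commute)
  qed
  have n4: "4 - n \<noteq> 0" using n by simp
  have pw: "P * w * \<epsilon> + 1 > 0" using P w eps by (simp add: add_pos_pos)
  define Q where "Q = 1/w + \<epsilon> * P"
  have Q: "Q > 0" using w P eps by (simp add: Q_def add_pos_pos)
  have h1: "w1 / w - \<epsilon> / (4 - n) * ((n - 4) * P * w1) = Q * w1"
    using n4 unfolding Q_def by (simp add: field_simps)
  have h2: "w ^ 4 / (1 / (P * w) + \<epsilon>) = P * w^4 / Q"
    using w P pw unfolding Q_def by (simp add: field_simps)
  have h3: "1 / P / (1 / (P * w) + \<epsilon>) = 1 / Q"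
    using w P pw unfolding Q_def by (simp add: field_simps)
  have h5: "(w1 / w - \<epsilon> / (4 - n) * ((n - 4) * P * w1)) *
     (- \<epsilon> * (w ^ 4 / (1 / (P * w) + \<epsilon>)) * w3 + E * A * w1 + D * w1
      - chi * (1 / P / (1 / (P * w) + \<epsilon>)) * z1)
      = w1 * (- \<epsilon> * (P * w^4) * w3 + Q * E * A * w1 + Q * D * w1 - chi * z1)"
    unfolding h1 h2 h3 using Q by (simp add: field_simps)
  show ?thesis
    unfolding e1 e2 e3 e4 e5 e6 e7 e8 e9 P_def[symmetric] h5
    using w P n4
    unfolding Q_def
    apply (simp add: field_simps)
    apply (simp add: algebra_simps power2_eq_square power3_eq_cube power4_eq_xxxx)
    done
qed
lemma dTheta:
  fixes W Wx Wxx Wxxx Wt Zx R Fl :: "real \<Rightarrow> real" and x n \<epsilon> \<alpha> D chi :: real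
  assumes pos: "W x > 0" and eps: "\<epsilon> > 0" and n2: "n \<le> 2"
  and d0: "(W has_real_derivative Wx x) (at x)"
  and d1: "(Wx has_real_derivative Wxx x) (at x)"
  and d2: "(Wxx has_real_derivative Wxxx x) (at x)"
  and fl: "((\<lambda>y. - \<epsilon> * (W y ^ 4 / (W y powr (4 - n) + \<epsilon>)) * Wxxx y + \<epsilon> powr (\<alpha>/2) * W y powr (-\<alpha>) * Wx y
              + D * Wx y - chi * (W y powr (5 - n) / (W y powr (4 - n) + \<epsilon>)) * Zx y) has_real_derivative (Wt x - R x)) (at x)"
  shows "((\<lambda>y. (ln (W y) - \<epsilon>/(4-n) * W y powr (n-4)) *
            (- \<epsilon> * (W y ^ 4 / (W y powr (4 - n) + \<epsilon>)) * Wxxx y + \<epsilon> powr (\<alpha>/2) * W y powr (-\<alpha>) * Wx y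
              + D * Wx y - chi * (W y powr (5 - n) / (W y powr (4 - n) + \<epsilon>)) * Zx y)
          + \<epsilon> * (W y powr (n-1) * Wx y * Wxx y - (n-1)/3 * (W y powr (n-2) * Wx y ^ 3)))
     has_real_derivative
      ((ln (W x) - \<epsilon>/(4-n) * W x powr (n-4)) * (Wt x - R x)
       + \<epsilon> powr (\<alpha>/2) * W x powr (-\<alpha>) * (1 / W x + \<epsilon> * W x powr (n-5)) * (Wx x)^2
       + D * (Wx x)^2 / W x + D * \<epsilon> * (Wx x)^2 / W x powr (5-n) - chi * (Wx x * Zx x)
       + \<epsilon> * (W x powr (n-1) * (Wxx x)^2)
       - \<epsilon> * (n-1) * (n-2) / 3 * (W x powr (n-3) * (Wx x)^4))) (at x)"
proof -
  note p1 = dpow[OF pos d0, of "n-4"] and l1 = dln[OF pos d0]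
  have r: "((\<lambda>y. (ln (W y) - \<epsilon>/(4-n) * W y powr (n-4))) has_real_derivative
            Wx x / W x - \<epsilon>/(4-n) * ((n-4) * W x powr (n - 4 - 1) * Wx x)) (at x)"
    by (intro DERIV_diff DERIV_cmult l1 p1)
  have fl': "((\<lambda>y. - \<epsilon> * (W y ^ 4 / (W y powr (4 - n) + \<epsilon>)) * Wxxx y + \<epsilon> powr (\<alpha>/2) * W y powr (-\<alpha>) * Wx y
              + D * Wx y - chi * (W y powr (5 - n) / (W y powr (4 - n) + \<epsilon>)) * Zx y) has_real_derivative (Wt x - R x)) (at x)"
    by (rule fl)
  have ps: "((\<lambda>y. W y powr (n-1) * Wx y * Wxx y - (n-1)/3 * (W y powr (n-2) * Wx y ^ 3)) has_real_derivative
     ((n-1) * W x powr (n-1-1) * Wx x * Wx x * Wxx x + W x powr (n-1) * Wxx x * Wxx x + W x powr (n-1) * Wx x * Wxxx x)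
     - (n-1)/3 * ((n-2) * W x powr (n-2-1) * Wx x * Wx x ^ 3 + W x powr (n-2) * (3 * Wx x ^ 2 * Wxx x))) (at x)"
    apply (rule DERIV_diff)
     apply (rule DERIV_cong)
      apply (rule DERIV_mult[OF DERIV_mult[OF dpow[OF pos d0] d1] d2])
     apply (simp add: algebra_simps)
    apply (rule DERIV_cmult)
    apply (rule DERIV_cong)
     apply (rule DERIV_mult[OF dpow[OF pos d0] DERIV_power[OF d1]])
    apply (simp add: algebra_simps power2_eq_square)
    done
  show ?thesis
    using DERIV_cong[OF DERIV_add[OF DERIV_mult[OF r fl] DERIV_cmult[OF ps, of \<epsilon>]] alg[OF pos eps n2, of "Wx x" "Wxxx x" "\<epsilon> powr (\<alpha>/2)" "W x powr (-\<alpha>)" D chi "Zx x" "Wt x" "R x" "Wxx x"]]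
    by simp
qed

lemma int_cmul: "f integrable_on S \<Longrightarrow> (\<lambda>x. (c::real) * f x) integrable_on S"
  using integrable_on_cmult_left[of f S c] by simp

lemma integral_lin6:
  fixes f1 f2 f3 f4 f5 f6 :: "real \<Rightarrow> real"
  assumes "f1 integrable_on S" "f2 integrable_on S" "f3 integrable_on S"
    "f4 integrable_on S" "f5 integrable_on S" "f6 integrable_on S"
  shows "integral S (\<lambda>x. f1 x - f2 x + a * f3 x + b * f4 x - c * f5 x + d * f6 x)
    = integral S f1 - integral S f2 + a * integral S f3 + b * integral S f4 - c * integral S f5 + d * integral S f6"
  using assms by (simp add: integral_add integral_diff integrable_add integrable_diff int_cmul)

lemma comp_ineq:
  fixes p q \<epsilon> n \<alpha> D chi :: real and W Wa Wb Wc Wt Za R :: "real \<Rightarrow> real"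
  assumes pq: "p < q" and eps: "0 < \<epsilon>" and n1: "1 \<le> n" and n2: "n \<le> 2"
  and pos: "\<forall>x\<in>{p..q}. W x > 0"
  and cW: "continuous_on {p..q} W" and cW1: "continuous_on {p..q} Wa"
  and cW2: "continuous_on {p..q} Wb" and cW3: "continuous_on {p..q} Wc"
  and cWt: "continuous_on {p..q} Wt" and cZ1: "continuous_on {p..q} Za" and cR: "continuous_on {p..q} R"
  and dW: "\<forall>x\<in>{p..q}. (W has_real_derivative Wa x) (at x within {p..q})"
  and dW1: "\<forall>x\<in>{p..q}. (Wa has_real_derivative Wb x) (at x within {p..q})"
  and dW2: "\<forall>x\<in>{p..q}. (Wb has_real_derivative Wc x) (at x within {p..q})"
  and fl: "\<forall>x\<in>{p<..<q}. ((\<lambda>y. - \<epsilon> * (W y ^ 4 / (W y powr (4 - n) + \<epsilon>)) * Wc y + \<epsilon> powr (\<alpha>/2) * W y powr (-\<alpha>) * Wa y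
              + D * Wa y - chi * (W y powr (5 - n) / (W y powr (4 - n) + \<epsilon>)) * Za y) has_real_derivative (Wt x - R x)) (at x)"
  and bd: "Wa p = 0" "Wa q = 0" "Wc p = 0" "Wc q = 0" "Za p = 0" "Za q = 0"
  shows "integral {p..q} (\<lambda>x. (ln (W x) - \<epsilon>/(4-n) * W x powr (n-4)) * Wt x)
         + \<epsilon> * integral {p..q} (\<lambda>x. W x powr (n-1) * (Wb x)^2)
         + D * integral {p..q} (\<lambda>x. (Wa x)^2 / W x)
         + D * \<epsilon> * integral {p..q} (\<lambda>x. (Wa x)^2 / W x powr (5-n))
       \<le> integral {p..q} (\<lambda>x. (ln (W x) - \<epsilon>/(4-n) * W x powr (n-4)) * R x)
         + chi * integral {p..q} (\<lambda>x. Wa x * Za x)"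
proof -
  define Th where "Th y = (ln (W y) - \<epsilon>/(4-n) * W y powr (n-4)) * (- \<epsilon> * (W y ^ 4 / (W y powr (4 - n) + \<epsilon>)) * Wc y + \<epsilon> powr (\<alpha>/2) * W y powr (-\<alpha>) * Wa y
              + D * Wa y - chi * (W y powr (5 - n) / (W y powr (4 - n) + \<epsilon>)) * Za y)
          + \<epsilon> * (W y powr (n-1) * Wa y * Wb y - (n-1)/3 * (W y powr (n-2) * Wa y ^ 3))" for y
  define T where "T x = (ln (W x) - \<epsilon>/(4-n) * W x powr (n-4)) * (Wt x - R x)
       + \<epsilon> powr (\<alpha>/2) * W x powr (-\<alpha>) * (1 / W x + \<epsilon> * W x powr (n-5)) * (Wa x)^2
       + D * (Wa x)^2 / W x + D * \<epsilon> * (Wa x)^2 / W x powr (5-n) - chi * (Wa x * Za x)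
       + \<epsilon> * (W x powr (n-1) * (Wb x)^2)
       - \<epsilon> * (n-1) * (n-2) / 3 * (W x powr (n-3) * (Wa x)^4)" for x
  have dT: "(Th has_vector_derivative T x) (at x)" if x: "x \<in> {p<..<q}" for x
  proof -
    have xi: "x \<in> interior {p..q}" and xc: "x \<in> {p..q}" using x by auto
    have d0: "(W has_real_derivative Wa x) (at x)" using dW xc at_within_interior[OF xi] by metis
    have d1: "(Wa has_real_derivative Wb x) (at x)" using dW1 xc at_within_interior[OF xi] by metis
    have d2: "(Wb has_real_derivative Wc x) (at x)" using dW2 xc at_within_interior[OF xi] by metis
    have "(Th has_real_derivative T x) (at x)"
      unfolding Th_def[abs_def] T_def
      by (rule dTheta[where W=W and Wx=Wa and Wxx=Wb and Wxxx=Wc and Wt=Wt and R=R and Zx=Za and x=x and \<alpha>=\<alpha> and D=D and chi=chi, OF _ eps n2 d0 d1 d2]) (use pos xc fl x in auto)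
    then show ?thesis by (simp add: has_real_derivative_iff_has_vector_derivative)
  qed
  have Wnz: "\<forall>x\<in>{p..q}. W x \<noteq> 0"
  proof
    fix x assume "x \<in> {p..q}"
    then have "W x > 0" using pos by blast
    then show "W x \<noteq> 0" by simp
  qed
  have dnz: "\<forall>x\<in>{p..q}. W x powr (4 - n) + \<epsilon> \<noteq> 0" using pos eps
    by (metis add_pos_pos less_irrefl powr_gt_zero)
  have pnz: "\<forall>x\<in>{p..q}. W x powr (5 - n) \<noteq> 0" using Wnz by simp
  have cTh: "continuous_on {p..q} Th"
    unfolding Th_def[abs_def]
    by (intro continuous_intros cW cW1 cW2 cW3 cZ1 Wnz dnz)
  have Th0: "Th p = 0" "Th q = 0" by (simp_all add: Th_def bd)
  have iT: "(T has_integral 0) {p..q}"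
    using fundamental_theorem_of_calculus_interior[OF less_imp_le[OF pq] cTh dT] Th0 by simp
  define T' where "T' x = (ln (W x) - \<epsilon>/(4-n) * W x powr (n-4)) * Wt x - (ln (W x) - \<epsilon>/(4-n) * W x powr (n-4)) * R x + D * ((Wa x)^2 / W x)
     + (D * \<epsilon>) * ((Wa x)^2 / W x powr (5-n)) - chi * (Wa x * Za x) + \<epsilon> * (W x powr (n-1) * (Wb x)^2)" for x
  have le: "T' x \<le> T x" if x: "x \<in> {p..q}" for x
  proof -
    have wx: "W x > 0" using pos x by blast
    have a: "0 \<le> \<epsilon> powr (\<alpha>/2) * W x powr (-\<alpha>) * (1 / W x + \<epsilon> * W x powr (n-5)) * (Wa x)^2"
      using wx eps by (intro mult_nonneg_nonneg) auto
    have b0: "(n-1) * (n-2) \<le> 0" using n1 n2 by (simp add: mult_nonneg_nonpos)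
    have b: "\<epsilon> * (n-1) * (n-2) / 3 * (W x powr (n-3) * (Wa x)^4) \<le> 0"
    proof -
      have b1: "0 \<le> \<epsilon>/3 * (W x powr (n-3) * (Wa x)^4)" using eps by (intro mult_nonneg_nonneg) auto
      have "\<epsilon> * (n-1) * (n-2) / 3 * (W x powr (n-3) * (Wa x)^4) = (n-1) * (n-2) * (\<epsilon>/3 * (W x powr (n-3) * (Wa x)^4))"
        by (simp add: algebra_simps)
      then show ?thesis using mult_nonpos_nonneg[OF b0 b1] by (simp only:)
    qed
    have e1: "(ln (W x) - \<epsilon>/(4-n) * W x powr (n-4)) * (Wt x - R x) = (ln (W x) - \<epsilon>/(4-n) * W x powr (n-4)) * Wt x - (ln (W x) - \<epsilon>/(4-n) * W x powr (n-4)) * R x" by (simp add: right_diff_distrib)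
    have e2: "D * (Wa x)^2 / W x = D * ((Wa x)^2 / W x)" by simp
    have e3: "D * \<epsilon> * (Wa x)^2 / W x powr (5-n) = (D * \<epsilon>) * ((Wa x)^2 / W x powr (5-n))" by simp
    show ?thesis unfolding T_def T'_def using a b e1 e2 e3 by linarith
  qed
  have ci: "continuous_on {p..q} (\<lambda>x. (ln (W x) - \<epsilon>/(4-n) * W x powr (n-4)))"
    by (intro continuous_intros cW Wnz)
  have i1: "(\<lambda>x. (ln (W x) - \<epsilon>/(4-n) * W x powr (n-4)) * Wt x) integrable_on {p..q}"
    by (intro integrable_continuous_interval continuous_intros ci cWt)
  have i2: "(\<lambda>x. (ln (W x) - \<epsilon>/(4-n) * W x powr (n-4)) * R x) integrable_on {p..q}"
    by (intro integrable_continuous_interval continuous_intros ci cR)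
  have i3: "(\<lambda>x. (Wa x)^2 / W x) integrable_on {p..q}"
    by (intro integrable_continuous_interval continuous_intros cW cW1 Wnz)
  have i4: "(\<lambda>x. (Wa x)^2 / W x powr (5-n)) integrable_on {p..q}"
    by (intro integrable_continuous_interval continuous_intros cW cW1 Wnz pnz)
  have i5: "(\<lambda>x. Wa x * Za x) integrable_on {p..q}"
    by (intro integrable_continuous_interval continuous_intros cZ1 cW1)
  have i6: "(\<lambda>x. W x powr (n-1) * (Wb x)^2) integrable_on {p..q}"
    by (intro integrable_continuous_interval continuous_intros cW cW2 Wnz)
  have iT': "T' integrable_on {p..q}"
    unfolding T'_def[abs_def]
    by (intro integrable_add integrable_diff int_cmul i1 i2 i3 i4 i5 i6)
  have "integral {p..q} T' \<le> integral {p..q} T"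
    using integral_le[OF iT' has_integral_integrable[OF iT] le] by blast
  also have "\<dots> = 0" using iT by (simp add: integral_unique)
  finally have T'0: "integral {p..q} T' \<le> 0" .
  have "integral {p..q} T' = integral {p..q} (\<lambda>x. (ln (W x) - \<epsilon>/(4-n) * W x powr (n-4)) * Wt x) - integral {p..q} (\<lambda>x. (ln (W x) - \<epsilon>/(4-n) * W x powr (n-4)) * R x)
     + D * integral {p..q} (\<lambda>x. (Wa x)^2 / W x) + (D * \<epsilon>) * integral {p..q} (\<lambda>x. (Wa x)^2 / W x powr (5-n))
     - chi * integral {p..q} (\<lambda>x. Wa x * Za x) + \<epsilon> * integral {p..q} (\<lambda>x. W x powr (n-1) * (Wb x)^2)"
    unfolding T'_def[abs_def]
    by (rule integral_lin6[OF i1 i2 i3 i4 i5 i6])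
  then show ?thesis using T'0 by (simp add: algebra_simps)
qed



lemma cont_swap:
  assumes "continuous_on (A \<times> B) (\<lambda>(x,t). f x t)"
  shows "continuous_on (B \<times> A) (\<lambda>(t,x). f x t)"
proof -
  have "continuous_on (B \<times> A) ((\<lambda>(x,t). f x t) \<circ> (\<lambda>(t,x). (x,t)))"
    by (rule continuous_on_compose[OF _ continuous_on_subset[OF assms]])
       (auto intro!: continuous_intros simp: split_beta)
  then show ?thesis by (simp add: o_def split_beta)
qed

lemma cont_slice:
  assumes "continuous_on (A \<times> B) (\<lambda>(x,t). f x t)" and "s \<in> B"
  shows "continuous_on A (\<lambda>x. f x s)"
proof -
  have "continuous_on A ((\<lambda>(x,t). f x t) \<circ> (\<lambda>x. (x,s)))"
    by (rule continuous_on_compose[OF _ continuous_on_subset[OF assms(1)]])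
       (use assms(2) in \<open>auto intro!: continuous_intros\<close>)
  then show ?thesis by (simp add: o_def)
qed

lemma leib:
  fixes p q t :: real and w :: "real \<Rightarrow> real \<Rightarrow> real" and G G' :: "real \<Rightarrow> real"
  assumes pq: "p \<le> q" and t: "t > 0"
  and cw: "continuous_on ({p..q} \<times> {0..}) (\<lambda>(x,t). w x t)"
  and pos: "\<forall>x\<in>{p..q}. \<forall>t\<ge>0. w x t > 0"
  and dt: "\<forall>x\<in>{p..q}. \<forall>t>0. ((\<lambda>s. w x s) has_real_derivative pdt w x t) (at t)"
  and cdt: "continuous_on ({p..q} \<times> {0<..}) (\<lambda>(x,t). pdt w x t)"
  and dG: "\<forall>y>0. (G has_real_derivative G' y) (at y)"
  and cG': "continuous_on {0<..} G'"
  shows "((\<lambda>s. integral {p..q} (\<lambda>x. G (w x s))) has_real_derivative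
           integral {p..q} (\<lambda>x. G' (w x t) * pdt w x t)) (at t)"
proof -
  have cG: "continuous_on {0<..} G"
    using dG by (intro continuous_at_imp_continuous_on) (auto intro: DERIV_isCont)
  have cw': "continuous_on ({0<..} \<times> {p..q}) (\<lambda>(s,x). w x s)"
    using cont_swap[OF cw] by (rule continuous_on_subset) auto
  have cwG': "continuous_on ({0<..} \<times> {p..q}) (\<lambda>(s,x). G' (w x s))"
  proof -
    have "continuous_on ({0<..} \<times> {p..q}) (G' \<circ> (\<lambda>(s,x). w x s))"
      by (rule continuous_on_compose[OF cw' continuous_on_subset[OF cG']]) (use pos in auto)
    then show ?thesis by (simp add: o_def split_beta)
  qed
  have cdt': "continuous_on ({0<..} \<times> {p..q}) (\<lambda>(s,x). pdt w x s)"
    using cont_swap[OF cdt] .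
  have "((\<lambda>s. integral (cbox p q) (\<lambda>x. G (w x s))) has_field_derivative
           integral (cbox p q) (\<lambda>x. G' (w x t) * pdt w x t)) (at t within {0<..})"
  proof (rule leibniz_rule_field_derivative[where fx="\<lambda>s x. G' (w x s) * pdt w x s"])
    fix s x :: real assume s: "s \<in> {0<..}" and x: "x \<in> cbox p q"
    have "((\<lambda>s. G (w x s)) has_real_derivative G' (w x s) * pdt w x s) (at s)"
      by (rule DERIV_chain2[of G]) (use dG pos dt s x in auto)
    then show "((\<lambda>s. G (w x s)) has_field_derivative G' (w x s) * pdt w x s) (at s within {0<..})"
      by (rule has_field_derivative_at_within)
  next
    fix s :: real assume s: "s \<in> {0<..}"
    have "continuous_on {p..q} (G \<circ> (\<lambda>x. w x s))"
      by (rule continuous_on_compose[OF cont_slice[OF cw] continuous_on_subset[OF cG]]) (use s pos in auto)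
    then show "(\<lambda>x. G (w x s)) integrable_on cbox p q"
      by (simp add: o_def integrable_continuous_interval)
  next
    show "continuous_on ({0<..} \<times> cbox p q) (\<lambda>(s, x). G' (w x s) * pdt w x s)"
      using continuous_on_mult[OF cwG' cdt'] by (simp add: split_beta)
  qed (use t in auto)
  then have "((\<lambda>s. integral {p..q} (\<lambda>x. G (w x s))) has_field_derivative
           integral {p..q} (\<lambda>x. G' (w x t) * pdt w x t)) (at t within {0<..})"
    by (simp only: box_real)
  moreover have "at t within {0<..} = at t" using t by (intro at_within_open) auto
  ultimately show ?thesis by (simp only:)
qed


lemma osc_bound:
  fixes W W1 :: "real \<Rightarrow> real"
  assumes ab: "a \<le> b" "p \<le> a" "b \<le> q"
  and dW: "\<forall>x\<in>{p..q}. (W has_real_derivative W1 x) (at x within {p..q})"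
  and cW1: "continuous_on {p..q} W1"
  shows "\<bar>W b - W a\<bar> \<le> integral {p..q} (\<lambda>x. \<bar>W1 x\<bar>)"
proof -
  have sub: "{a..b} \<subseteq> {p..q}" using ab by auto
  have "(W1 has_integral (W b - W a)) {a..b}"
  proof (rule fundamental_theorem_of_calculus[OF ab(1)])
    fix x assume "x \<in> {a..b}"
    then have "(W has_vector_derivative W1 x) (at x within {p..q})"
      using dW sub by (auto simp: has_real_derivative_iff_has_vector_derivative)
    then show "(W has_vector_derivative W1 x) (at x within {a..b})"
      by (rule has_vector_derivative_within_subset[OF _ sub])
  qed
  then have e: "W b - W a = integral {a..b} W1" by (simp add: integral_unique)
  have c1: "continuous_on {a..b} W1" using continuous_on_subset[OF cW1 sub] .
  have c2: "continuous_on {a..b} (\<lambda>x. \<bar>W1 x\<bar>)" by (intro continuous_intros c1)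
  have "\<bar>integral {a..b} W1\<bar> \<le> integral {a..b} (\<lambda>x. \<bar>W1 x\<bar>)"
    using Henstock_Kurzweil_Integration.integral_norm_bound_integral[OF integrable_continuous_interval[OF c1]
        integrable_continuous_interval[OF c2]] by simp
  also have "\<dots> \<le> integral {p..q} (\<lambda>x. \<bar>W1 x\<bar>)"
    by (rule integral_subset_le[OF sub integrable_continuous_interval[OF c2]
          integrable_continuous_interval]) (auto intro!: continuous_intros cW1)
  finally show ?thesis using e by simp
qed

lemma sup_bound:
  fixes W W1 :: "real \<Rightarrow> real"
  assumes pq: "p < q"
  and cW: "continuous_on {p..q} W"
  and dW: "\<forall>x\<in>{p..q}. (W has_real_derivative W1 x) (at x within {p..q})"
  and cW1: "continuous_on {p..q} W1"
  and x: "x \<in> {p..q}"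
  shows "W x \<le> integral {p..q} W / (q - p) + integral {p..q} (\<lambda>x. \<bar>W1 x\<bar>)"
proof -
  obtain x0 where x0: "x0 \<in> {p..q}" and mn: "\<forall>y\<in>{p..q}. W x0 \<le> W y"
    using continuous_attains_inf[OF compact_Icc _ cW] pq by auto
  have "integral {p..q} (\<lambda>_. W x0) \<le> integral {p..q} W"
    by (rule integral_le[OF _ integrable_continuous_interval[OF cW]]) (use mn in auto)
  then have "W x0 * (q - p) \<le> integral {p..q} W" using pq by (simp add: mult.commute)
  then have m: "W x0 \<le> integral {p..q} W / (q - p)" using pq by (simp add: field_simps)
  have "\<bar>W x - W x0\<bar> \<le> integral {p..q} (\<lambda>x. \<bar>W1 x\<bar>)"
  proof (cases "x0 \<le> x")
    case True then show ?thesis using osc_bound[OF True _ _ dW cW1] x x0 by auto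
  next
    case False then show ?thesis using osc_bound[of x x0 p q W W1] dW cW1 x x0 by auto
  qed
  then show ?thesis using m by linarith
qed

lemma sq_from_amgm:
  fixes S U I :: real
  assumes U: "U > 0" and I: "I \<ge> 0" and S: "S \<ge> 0"
  and h: "\<And>k. k > 0 \<Longrightarrow> S \<le> (k * I + U / k) / 2"
  shows "S^2 \<le> U * I"
proof (cases "I > 0")
  case True
  define k where "k = sqrt (U / I)"
  have k: "k > 0" using U True by (simp add: k_def)
  have kI: "k * I = sqrt (U * I)" using U True
    by (simp add: k_def real_sqrt_divide field_simps real_sqrt_mult)
  have Uk: "U / k = sqrt (U * I)" using U True
    by (simp add: k_def real_sqrt_divide field_simps real_sqrt_mult)
  have "S \<le> sqrt (U * I)" using h[OF k] kI Uk by simp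
  then have "S^2 \<le> (sqrt (U*I))^2" using S by (simp add: power_mono)
  also have "\<dots> = U * I" using U I by simp
  finally show ?thesis .
next
  case False
  then have I0: "I = 0" using I by simp
  have "S = 0"
  proof (rule ccontr)
    assume "S \<noteq> 0" then have Sp: "S > 0" using S by simp
    have "S \<le> (U / S) * I / 2 + U / (U / S) / 2" using h[of "U/S"] U Sp by (simp add: add_divide_distrib)
    then have "S \<le> S / 2" using I0 U Sp by simp
    then show False using Sp by simp
  qed
  then show ?thesis using I0 by simp
qed

lemma amgm_pt: "w > 0 \<Longrightarrow> k > 0 \<Longrightarrow> \<bar>a::real\<bar> \<le> (k * (a^2 / w) + w / k) / 2"
proof -
  assume w: "w > 0" and k: "k > 0"
  have "0 \<le> (k * \<bar>a\<bar> - w)^2" by simp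
  then have "2 * k * w * \<bar>a\<bar> \<le> k^2 * a^2 + w^2" by (simp add: power2_eq_square algebra_simps)
  then have "2 * \<bar>a\<bar> \<le> (k^2 * a^2 + w^2) / (k * w)" using w k by (simp add: field_simps)
  also have "(k^2 * a^2 + w^2) / (k * w) = k * (a^2 / w) + w / k" using w k by (simp add: field_simps power2_eq_square)
  finally show ?thesis by simp
qed

lemma integral_lin2:
  fixes f g :: "real \<Rightarrow> real"
  assumes "f integrable_on S" "g integrable_on S"
  shows "integral S (\<lambda>x. a * f x + b * g x) = a * integral S f + b * integral S g"
  using assms by (simp add: integral_add int_cmul)

lemma S_sq_bound:
  fixes W W1 :: "real \<Rightarrow> real"
  assumes pq: "p < q"
  and pos: "\<forall>x\<in>{p..q}. W x > 0"
  and cW: "continuous_on {p..q} W" and cW1: "continuous_on {p..q} W1"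
  shows "(integral {p..q} (\<lambda>x. \<bar>W1 x\<bar>))^2 \<le> integral {p..q} W * integral {p..q} (\<lambda>x. (W1 x)^2 / W x)"
proof (rule sq_from_amgm)
  have Wnz: "\<forall>x\<in>{p..q}. W x \<noteq> 0" using pos by (metis less_irrefl)
  have i1: "W integrable_on {p..q}" by (rule integrable_continuous_interval[OF cW])
  have i2: "(\<lambda>x. (W1 x)^2 / W x) integrable_on {p..q}"
    by (intro integrable_continuous_interval continuous_intros cW cW1 Wnz)
  have i3: "(\<lambda>x. \<bar>W1 x\<bar>) integrable_on {p..q}"
    by (intro integrable_continuous_interval continuous_intros cW1)
  show "integral {p..q} W > 0"
  proof -
    obtain x0 where x0: "x0 \<in> {p..q}" and mn: "\<forall>y\<in>{p..q}. W x0 \<le> W y"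
      using continuous_attains_inf[OF compact_Icc _ cW] pq by auto
    have "integral {p..q} (\<lambda>_. W x0) \<le> integral {p..q} W"
      by (rule integral_le[OF _ i1]) (use mn in auto)
    then have "W x0 * (q - p) \<le> integral {p..q} W" using pq by (simp add: mult.commute)
    moreover have "W x0 * (q - p) > 0" using pos x0 pq by simp
    ultimately show ?thesis by linarith
  qed
  show "integral {p..q} (\<lambda>x. (W1 x)^2 / W x) \<ge> 0"
    by (rule integral_nonneg[OF i2]) (use pos in \<open>auto intro!: divide_nonneg_pos\<close>)
  show "integral {p..q} (\<lambda>x. \<bar>W1 x\<bar>) \<ge> 0" by (rule integral_nonneg[OF i3]) auto
  fix k :: real assume k: "k > 0"
  have "integral {p..q} (\<lambda>x. \<bar>W1 x\<bar>) \<le> integral {p..q} (\<lambda>x. (k/2) * ((W1 x)^2 / W x) + (1/(2*k)) * W x)"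
  proof (rule integral_le[OF i3])
    show "(\<lambda>x. (k/2) * ((W1 x)^2 / W x) + (1/(2*k)) * W x) integrable_on {p..q}"
      by (intro integrable_add int_cmul i1 i2)
    fix x assume x: "x \<in> {p..q}"
    have "\<bar>W1 x\<bar> \<le> (k * ((W1 x)^2 / W x) + W x / k) / 2" using amgm_pt[OF _ k] pos x by blast
    also have "\<dots> = (k/2) * ((W1 x)^2 / W x) + (1/(2*k)) * W x" by (simp add: field_simps)
    finally show "\<bar>W1 x\<bar> \<le> (k/2) * ((W1 x)^2 / W x) + (1/(2*k)) * W x" .
  qed
  also have "\<dots> = (k/2) * integral {p..q} (\<lambda>x. (W1 x)^2 / W x) + (1/(2*k)) * integral {p..q} W"
    by (rule integral_lin2[OF i2 i1])
  also have "\<dots> = (k * integral {p..q} (\<lambda>x. (W1 x)^2 / W x) + integral {p..q} W / k) / 2"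
    by (simp add: field_simps)
  finally show "integral {p..q} (\<lambda>x. \<bar>W1 x\<bar>) \<le> (k * integral {p..q} (\<lambda>x. (W1 x)^2 / W x) + integral {p..q} W / k) / 2" .
qed


lemma epsterm:
  fixes v \<epsilon> n :: real
  assumes v: "v > 0" and e: "0 < \<epsilon>" "\<epsilon> < 1" and n: "1 \<le> n" "n \<le> 2"
  shows "0 \<le> \<epsilon> * v powr (n-4) * (3 * v ^ 3 / (3 * v ^ 2 + \<epsilon>))"
    "\<epsilon> * v powr (n-4) * (3 * v ^ 3 / (3 * v ^ 2 + \<epsilon>)) \<le> 3"
    "\<epsilon> * v powr (n-4) * (3 * v ^ 3 / (3 * v ^ 2 + \<epsilon>)) * v \<le> 3"
proof -
  have d: "3 * v ^ 2 + \<epsilon> > 0" using v e by (simp add: add_pos_pos)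
  have eq: "\<epsilon> * v powr (n-4) * (3 * v ^ 3 / (3 * v ^ 2 + \<epsilon>)) = 3 * \<epsilon> * v powr (n-1) / (3 * v ^ 2 + \<epsilon>)"
  proof -
    have "v powr (n-1) = v powr ((n-4) + real 3)" by simp
    also have "\<dots> = v powr (n-4) * v powr (real 3)" by (rule powr_add)
    also have "v powr (real 3) = v^3" using v by (rule powr_realpow)
    finally have "v powr (n-1) = v powr (n-4) * v^3" .
    then show ?thesis by simp
  qed
  show "0 \<le> \<epsilon> * v powr (n-4) * (3 * v ^ 3 / (3 * v ^ 2 + \<epsilon>))" using v e d by simp
  have "3 * \<epsilon> * v powr (n-1) / (3 * v ^ 2 + \<epsilon>) \<le> 3 \<and> 3 * \<epsilon> * v powr (n-1) / (3 * v ^ 2 + \<epsilon>) * v \<le> 3"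
  proof (cases "v \<le> 1")
    case True
    have p: "v powr (n-1) \<le> 1" using powr_le1[of "n-1" v] n v True by simp
    have p0: "v powr (n-1) \<ge> 0" by simp
    have a: "\<epsilon> * v powr (n-1) \<le> 3 * v ^ 2 + \<epsilon>"
      using mult_left_mono[OF p, of \<epsilon>] e v by (simp add: add_increasing)
    then have b: "3 * \<epsilon> * v powr (n-1) / (3 * v ^ 2 + \<epsilon>) \<le> 3" using d by (simp add: field_simps)
    moreover have "3 * \<epsilon> * v powr (n-1) / (3 * v ^ 2 + \<epsilon>) * v \<le> 3 * \<epsilon> * v powr (n-1) / (3 * v ^ 2 + \<epsilon>)"
      using True v e d p0 by (intro mult_left_le) auto
    ultimately show ?thesis by linarith
  next
    case False
    have p: "v powr (n-1) \<le> v" using powr_mono[of "n-1" 1 v] n False by simp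
    have p0: "v powr (n-1) \<ge> 0" by simp
    have a: "3 * \<epsilon> * v powr (n-1) \<le> 3 * v^2 + \<epsilon>"
    proof -
      have "3 * \<epsilon> * v powr (n-1) \<le> 3 * 1 * v" using p e p0 by (intro mult_mono) auto
      also have "\<dots> \<le> 3 * v^2" using False by (simp add: power2_eq_square)
      finally show ?thesis using e by simp
    qed
    have b: "3 * \<epsilon> * v powr (n-1) * v \<le> 3 * v^2 + \<epsilon>"
    proof -
      have "3 * \<epsilon> * v powr (n-1) * v \<le> 3 * 1 * v * v" using p e p0 v
        by (intro mult_mono) auto
      then show ?thesis using e by (simp add: power2_eq_square)
    qed
    show ?thesis using a b d by (simp add: field_simps)
  qed
  then show "\<epsilon> * v powr (n-4) * (3 * v ^ 3 / (3 * v ^ 2 + \<epsilon>)) \<le> 3"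
    "\<epsilon> * v powr (n-4) * (3 * v ^ 3 / (3 * v ^ 2 + \<epsilon>)) * v \<le> 3" unfolding eq by auto
qed

lemma g_le: "v > 0 \<Longrightarrow> \<epsilon> > 0 \<Longrightarrow> 3 * v ^ 3 / (3 * v ^ 2 + \<epsilon>) \<le> (v::real)"
proof -
  assume v: "v > 0" and e: "\<epsilon> > 0"
  have d: "3 * v ^ 2 + \<epsilon> > 0" using v e by (simp add: add_pos_pos)
  have "3 * v ^ 3 \<le> v * (3 * v ^ 2 + \<epsilon>)" using v e by (simp add: power2_eq_square power3_eq_cube algebra_simps)
  then show ?thesis using d by (simp add: pos_divide_le_eq)
qed

lemma g_pos: "v > 0 \<Longrightarrow> \<epsilon> > 0 \<Longrightarrow> 3 * v ^ 3 / (3 * v ^ 2 + \<epsilon>) > (0::real)"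
  by (simp add: add_pos_pos)

lemma nlnx: "0 < y \<Longrightarrow> y < 1 \<Longrightarrow> - ln y * y \<le> (1::real)"
proof -
  assume y: "0 < y" "y < 1"
  have "ln (1/y) \<le> 1/y - 1" using ln_le_minus_one[of "1/y"] y by simp
  then have "- ln y \<le> 1/y - 1" using y by (simp add: ln_div)
  then have "- ln y * y \<le> (1/y - 1) * y" using y by (intro mult_right_mono) auto
  also have "\<dots> \<le> 1" using y by (simp add: field_simps)
  finally show ?thesis .
qed

lemma ln_sqrt: "1 \<le> y \<Longrightarrow> ln y \<le> 2 * sqrt (y::real)"
proof -
  assume y: "1 \<le> y"
  have "ln y = 2 * ln (sqrt y)" using y by (simp add: ln_sqrt)
  also have "\<dots> \<le> 2 * sqrt y"
  proof -
    have "0 < sqrt y" using y by simp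
    then have "ln (sqrt y) < sqrt y" by (rule ln_less_self)
    then show ?thesis by linarith
  qed
  finally show ?thesis .
qed

lemma part_big:
  fixes y g lam c :: real
  assumes y: "1 \<le> y" and g: "0 < g" "g \<le> y" and lam: "lam > 0" and c: "c \<le> 0"
  shows "ln y * g * (lam - y + c) \<le> lam^3"
proof (cases "y \<le> lam")
  case True
  have l0: "0 \<le> ln y" using y by simp
  have l1: "ln y \<le> lam" using ln_less_self[of y] y True by linarith
  have "ln y * g * (lam - y + c) \<le> ln y * g * lam"
    using l0 g y c True by (intro mult_left_mono) auto
  also have "\<dots> \<le> lam * lam * lam" using l0 l1 g True lam by (intro mult_mono) auto
  finally show ?thesis by (simp add: power3_eq_cube)
next
  case False
  have "ln y * g * (lam - y + c) \<le> 0" using y g False c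
    by (intro mult_nonneg_nonpos) auto
  moreover have "lam^3 > 0" using lam by simp
  ultimately show ?thesis by linarith
qed

lemma part_small:
  fixes y g d :: real
  assumes y: "0 < y" "y < 1" and g: "0 < g" "g \<le> y" and d: "d \<le> K"
  and K: "K \<ge> 0"
  shows "ln y * g * (- d) \<le> K"
proof (cases "d \<ge> 0")
  case True
  have l: "- ln y \<ge> 0" using y by simp
  have "ln y * g * (- d) = (- ln y) * g * d" by simp
  also have "\<dots> \<le> (- ln y) * y * K"
  proof -
    have "(- ln y) * g \<le> (- ln y) * y" using l g by (intro mult_left_mono) auto
    moreover have "0 \<le> (- ln y) * y" using l y by (intro mult_nonneg_nonneg) auto
    ultimately have "(- ln y) * g * d \<le> (- ln y) * y * d" using True by (intro mult_right_mono) auto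
    also have "\<dots> \<le> (- ln y) * y * K" using \<open>0 \<le> (- ln y) * y\<close> d by (intro mult_left_mono) auto
    finally show ?thesis .
  qed
  also have "\<dots> \<le> 1 * K" using nlnx[OF y] K by (intro mult_right_mono) auto
  finally show ?thesis by simp
next
  case False
  have "ln y * g * (- d) \<le> 0" using y g False
    by (intro mult_nonpos_nonneg) (auto intro: mult_nonpos_nonneg)
  then show ?thesis using K by linarith
qed


lemma div_bound: "Z \<le> M \<Longrightarrow> 0 \<le> M \<Longrightarrow> 1 \<le> c \<Longrightarrow> Z / c \<le> (M::real)"
proof -
  assume a: "Z \<le> M" "0 \<le> M" "1 \<le> c"
  show ?thesis
  proof (cases "Z \<le> 0")
    case True then have "Z / c \<le> 0" using a by (simp add: divide_nonpos_pos)
    then show ?thesis using a by linarith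
  next
    case False then have "Z / c \<le> Z" using a by (simp add: divide_le_eq)
    then show ?thesis using a by linarith
  qed
qed

lemma split_phi0: "(L - (\<epsilon>::real)/m * P) * (g * c) = L * g * c + (\<epsilon> * P * g) * (- c) / m"
  by (simp add: algebra_simps)

lemma split_phi:
  fixes y \<epsilon> n c :: real
  shows "(ln y - \<epsilon>/(4-n) * y powr (n-4)) * (3 * y ^ 3 / (3 * y ^ 2 + \<epsilon>) * c)
       = ln y * (3 * y ^ 3 / (3 * y ^ 2 + \<epsilon>)) * c
         + (\<epsilon> * y powr (n-4) * (3 * y ^ 3 / (3 * y ^ 2 + \<epsilon>))) * (- c) / (4 - n)"
  by (rule split_phi0)

lemma PB_v:
  fixes u v \<epsilon> n lam a :: real
  assumes u: "u > 0" and v: "v > 0" and e: "0 < \<epsilon>" "\<epsilon> < 1" and n: "1 \<le> n" "n \<le> 2"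
    and lam: "lam > 0" and a: "a > 0"
  shows "(ln v - \<epsilon>/(4-n) * v powr (n-4)) * (3 * v ^ 3 / (3 * v ^ 2 + \<epsilon>) * (lam - v - a * u))
     \<le> (4 + lam^3 + 4*a) * (1 + u)"
proof -
  define g where "g = 3 * v ^ 3 / (3 * v ^ 2 + \<epsilon>)"
  define Y where "Y = \<epsilon> * v powr (n-4) * g"
  have g: "0 < g" "g \<le> v" unfolding g_def using g_pos g_le v e by auto
  have Y: "0 \<le> Y" "Y \<le> 3" "Y * v \<le> 3" unfolding Y_def g_def using epsterm[OF v e n] by auto
  have sp: "(ln v - \<epsilon>/(4-n) * v powr (n-4)) * (g * (lam - v - a * u))
      = ln v * g * (lam - v - a * u) + Y * (v + a * u - lam) / (4 - n)"
    using split_phi[of v \<epsilon> n "lam - v - a * u"] unfolding g_def Y_def by simp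
  have au: "a * u \<ge> 0" using a u by simp
  have p1: "ln v * g * (lam - v - a * u) \<le> lam^3 + 1 + a * u"
  proof (cases "1 \<le> v")
    case True
    have "ln v * g * (lam - v + - (a*u)) \<le> lam^3" by (rule part_big[OF True g lam]) (use au in simp)
    then show ?thesis using au by simp
  next
    case False
    have "ln v * g * (- (v + a*u - lam)) \<le> 1 + a*u"
      by (rule part_small) (use False v g lam au in auto)
    moreover have "ln v * g * (lam - v - a * u) = ln v * g * (- (v + a*u - lam))" by simp
    moreover have "lam^3 > 0" using lam by simp
    ultimately show ?thesis by linarith
  qed
  have p2: "Y * (v + a * u - lam) / (4 - n) \<le> 3 + 3 * (a * u)"
  proof (rule div_bound)
    have "Y * (v + a * u - lam) \<le> Y * (v + a * u)" using Y lam by (intro mult_left_mono) auto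
    also have "\<dots> = Y * v + Y * (a * u)" by (simp add: algebra_simps)
    also have "\<dots> \<le> 3 + 3 * (a * u)" using Y au by (intro add_mono mult_right_mono) (auto simp: mult.commute)
    finally show "Y * (v + a * u - lam) \<le> 3 + 3 * (a * u)" .
  qed (use au n in auto)
  have l3: "lam^3 * u \<ge> 0" using lam u by simp
  have "(4 + lam^3 + 4*a) * (1 + u) = 4 + lam^3 + 4*a + 4*u + lam^3*u + 4*(a*u)" by (simp add: algebra_simps)
  then show ?thesis using sp p1 p2 l3 a u unfolding g_def by linarith
qed

lemma PB_u:
  fixes u v \<epsilon> n lam a :: real
  assumes u: "u > 0" and v: "v > 0" and e: "0 < \<epsilon>" "\<epsilon> < 1" and n: "1 \<le> n" "n \<le> 2"
    and lam: "lam > 0" and a: "a > 0"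
  shows "(ln u - \<epsilon>/(4-n) * u powr (n-4)) * (3 * u ^ 3 / (3 * u ^ 2 + \<epsilon>) * (lam - u + a * v))
     \<le> 4 + lam^3 + 2 * a * v * (u * sqrt u)"
proof -
  define g where "g = 3 * u ^ 3 / (3 * u ^ 2 + \<epsilon>)"
  define Y where "Y = \<epsilon> * u powr (n-4) * g"
  have g: "0 < g" "g \<le> u" unfolding g_def using g_pos g_le u e by auto
  have Y: "0 \<le> Y" "Y \<le> 3" "Y * u \<le> 3" unfolding Y_def g_def using epsterm[OF u e n] by auto
  have sp: "(ln u - \<epsilon>/(4-n) * u powr (n-4)) * (g * (lam - u + a * v))
      = ln u * g * (lam - u + a * v) + Y * (u - lam - a * v) / (4 - n)"
    using split_phi[of u \<epsilon> n "lam - u + a * v"] unfolding g_def Y_def by simp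
  have av: "a * v \<ge> 0" using a v by simp
  have us: "0 \<le> 2 * a * v * (u * sqrt u)" using a v u by simp
  have p1: "ln u * g * (lam - u + a * v) \<le> lam^3 + 1 + 2 * a * v * (u * sqrt u)"
  proof (cases "1 \<le> u")
    case True
    have b1: "ln u * g * (lam - u + 0) \<le> lam^3" by (rule part_big[OF True g lam]) simp
    have l0: "0 \<le> ln u" using True by simp
    have "ln u * g * (a * v) \<le> (2 * sqrt u) * u * (a * v)"
      using ln_sqrt[OF True] l0 g av by (intro mult_right_mono mult_mono) auto
    then have b2: "ln u * g * (a * v) \<le> 2 * a * v * (u * sqrt u)" by (simp add: algebra_simps)
    have "ln u * g * (lam - u + a * v) = ln u * g * (lam - u + 0) + ln u * g * (a * v)" by (simp add: algebra_simps)
    then show ?thesis using b1 b2 by linarith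
  next
    case False
    have "ln u * g * (- (u - lam - a * v)) \<le> 1"
      by (rule part_small) (use False u g lam av in auto)
    moreover have "ln u * g * (lam - u + a * v) = ln u * g * (- (u - lam - a * v))" by simp
    moreover have "lam^3 > 0" using lam by simp
    ultimately show ?thesis using us by linarith
  qed
  have p2: "Y * (u - lam - a * v) / (4 - n) \<le> 3"
  proof (rule div_bound)
    have "Y * (u - lam - a * v) \<le> Y * u" using Y lam av by (intro mult_left_mono) auto
    then show "Y * (u - lam - a * v) \<le> 3" using Y by linarith
  qed (use n in auto)
  show ?thesis using sp p1 p2 unfolding g_def by linarith
qed



lemma young2: "(e::real) > 0 \<Longrightarrow> 2 * x * y \<le> e * x^2 + y^2 / e"
proof -
  assume e: "e > 0"
  have "0 \<le> (e * x - y)^2" by simp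
  then have h: "e * (2 * x * y) \<le> e^2 * x^2 + y^2" by (simp add: power2_eq_square algebra_simps)
  have "e * (e * x^2 + y^2 / e) = e^2 * x^2 + y^2" using e by (simp add: algebra_simps power2_eq_square)
  then have "e * (2 * x * y) \<le> e * (e * x^2 + y^2 / e)" using h by simp
  then show ?thesis using e by (rule mult_left_le_imp_le)
qed

lemma pow_le17: "(x::real) \<ge> 0 \<Longrightarrow> k \<le> 7 \<Longrightarrow> x^k \<le> 1 + x^7"
proof -
  assume x: "x \<ge> 0" and k: "k \<le> 7"
  show ?thesis
  proof (cases "x \<le> 1")
    case True then have "x^k \<le> 1" using x by (simp add: power_le_one)
    then show ?thesis using x by (smt (verit) zero_le_power)
  next
    case False then have "x^k \<le> x^7" using k by (intro power_increasing) auto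
    then show ?thesis by simp
  qed
qed

lemma UV34: "(U::real) \<ge> 0 \<Longrightarrow> V \<ge> 0 \<Longrightarrow> U^3 * V^4 \<le> U^7 + V^7"
proof -
  assume U: "U \<ge> 0" and V: "V \<ge> 0"
  show ?thesis
  proof (cases "U \<le> V")
    case True
    have "U^3 * V^4 \<le> V^3 * V^4" using True U V by (intro mult_right_mono power_mono) auto
    also have "\<dots> = V^7" by (simp add: power_add[symmetric])
    finally show ?thesis using U by (smt (verit) zero_le_power)
  next
    case False
    have "U^3 * V^4 \<le> U^3 * U^4" using False U V by (intro mult_left_mono power_mono) auto
    also have "\<dots> = U^7" by (simp add: power_add[symmetric])
    finally show ?thesis using V by (smt (verit) zero_le_power)
  qed
qed

lemma UV22: "(U::real) \<ge> 0 \<Longrightarrow> V \<ge> 0 \<Longrightarrow> U^2 * V^2 \<le> 1 + U^7 + V^7"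
proof -
  assume U: "U \<ge> 0" and V: "V \<ge> 0"
  show ?thesis
  proof (cases "U \<le> V")
    case True
    have "U^2 * V^2 \<le> V^2 * V^2" using True U V by (intro mult_right_mono power_mono) auto
    also have "\<dots> = V^4" by (simp add: power_add[symmetric])
    also have "\<dots> \<le> 1 + V^7" using pow_le17[OF V] by simp
    finally show ?thesis using U by (smt (verit) zero_le_power)
  next
    case False
    have "U^2 * V^2 \<le> U^2 * U^2" using False U V by (intro mult_left_mono power_mono) auto
    also have "\<dots> = U^4" by (simp add: power_add[symmetric])
    also have "\<dots> \<le> 1 + U^7" using pow_le17[OF U] by simp
    finally show ?thesis using V by (smt (verit) zero_le_power)
  qed
qed

lemma KR:
  fixes U V I S L a D :: real
  assumes U: "U > 0" and V: "V \<ge> 0" and I: "I \<ge> 0" and S: "S \<ge> 0" and SI: "S^2 \<le> U * I"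
    and L: "L > 0" and a: "a \<ge> 0" and D: "D > 0"
  shows "a * V * ((U / L + S) * sqrt (U / L + S))
     \<le> D / 2 * I + (D / (4 * L^2) + 2 * a^2 / (L * D) + 4 * a^4 / D^3) * (1 + U^7 + V^7)"
proof -
  define B where "B = U / L + S"
  have B: "B \<ge> 0" using U L S by (simp add: B_def)
  define e where "e = D / (4 * U)"
  have e: "e > 0" using D U by (simp add: e_def)
  have s1: "2 * B * (a * V * sqrt B) \<le> e * B^2 + (a * V * sqrt B)^2 / e" by (rule young2[OF e])
  have sq: "(a * V * sqrt B)^2 = a^2 * V^2 * B" using B by (simp add: power_mult_distrib)
  have s1': "a * V * (B * sqrt B) \<le> e * B^2 / 2 + a^2 * V^2 * B / (2 * e)"
    using s1 unfolding sq by (simp add: field_simps)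
  have B2: "B^2 \<le> 2 * (U/L)^2 + 2 * (U * I)"
  proof -
    have e1: "B^2 = (U/L)^2 + 2 * (U/L) * S + S^2" by (simp add: B_def power2_eq_square algebra_simps)
    have e2: "2 * (U/L) * S \<le> (U/L)^2 + S^2" using young2[of 1 "U/L" S] by simp
    have "B^2 \<le> 2 * (U/L)^2 + 2 * S^2" using e1 e2 by (smt (verit))
    then show ?thesis using SI by linarith
  qed
  have t1: "e * B^2 / 2 \<le> D * U / (4 * L^2) + D / 4 * I"
  proof -
    have "e * B^2 / 2 \<le> e * (2 * (U/L)^2 + 2 * (U * I)) / 2" using B2 e by (simp add: mult_left_mono)
    also have "\<dots> = D * U / (4 * L^2) + D / 4 * I" using U L unfolding e_def by (simp add: field_simps power2_eq_square)
    finally show ?thesis .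
  qed
  have t2: "a^2 * V^2 * B / (2 * e) = 2 * a^2 * V^2 * U^2 / (L * D) + 2 * (a^2 * V^2 * U / D) * S"
    using U L D unfolding e_def B_def by (simp add: field_simps power2_eq_square)
  define m where "m = a^2 * V^2 * U / D"
  define th where "th = D / (4 * U)"
  have th: "th > 0" using D U by (simp add: th_def)
  have t3: "2 * m * S \<le> D / 4 * I + 4 * a^4 * U^3 * V^4 / D^3"
  proof -
    have "2 * m * S = 2 * S * m" by simp
    also have "\<dots> \<le> th * S^2 + m^2 / th" by (rule young2[OF th])
    also have "th * S^2 \<le> th * (U * I)" using SI th by (simp add: mult_left_mono)
    also have "th * (U * I) = D / 4 * I" using U unfolding th_def by (simp add: field_simps)
    also have "m^2 / th = 4 * a^4 * U^3 * V^4 / D^3" using U D unfolding m_def th_def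
      by (simp add: field_simps power2_eq_square power3_eq_cube power4_eq_xxxx)
    finally show ?thesis by simp
  qed
  have main: "a * V * (B * sqrt B) \<le> D / 2 * I + D * U / (4 * L^2) + 2 * a^2 / (L * D) * (U^2 * V^2)
              + 4 * a^4 / D^3 * (U^3 * V^4)"
  proof -
    have "2 * a^2 * V^2 * U^2 / (L * D) = 2 * a^2 / (L * D) * (U^2 * V^2)" by (simp add: field_simps)
    moreover have "4 * a^4 * U^3 * V^4 / D^3 = 4 * a^4 / D^3 * (U^3 * V^4)" by (simp add: field_simps)
    ultimately show ?thesis using s1' t1 t2 t3 unfolding m_def by linarith
  qed
  have W: "1 + U^7 + V^7 \<ge> 0" using U V by (smt (verit) zero_le_power)
  have c1: "D * U / (4 * L^2) \<le> D / (4 * L^2) * (1 + U^7 + V^7)"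
  proof -
    have "U \<le> 1 + U^7" using pow_le17[of U 1] U by simp
    then have "U \<le> 1 + U^7 + V^7" using V by (smt (verit) zero_le_power)
    then have "D / (4 * L^2) * U \<le> D / (4 * L^2) * (1 + U^7 + V^7)" using D L by (intro mult_left_mono) auto
    then show ?thesis by simp
  qed
  have c2: "2 * a^2 / (L * D) * (U^2 * V^2) \<le> 2 * a^2 / (L * D) * (1 + U^7 + V^7)"
    using UV22[of U V] U V L D by (intro mult_left_mono) auto
  have c3: "4 * a^4 / D^3 * (U^3 * V^4) \<le> 4 * a^4 / D^3 * (1 + U^7 + V^7)"
  proof -
    have "U^3 * V^4 \<le> 1 + U^7 + V^7" using UV34[of U V] U V by linarith
    then show ?thesis using D by (intro mult_left_mono) auto
  qed
  show ?thesis using main c1 c2 c3 unfolding B_def by (simp add: algebra_simps)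
qed
lemma integral_lin3:
  fixes f1 f2 f3 :: "real \<Rightarrow> real"
  assumes "f1 integrable_on S" "f2 integrable_on S" "f3 integrable_on S"
  shows "integral S f1 - integral S f2 + c * integral S f3 = integral S (\<lambda>x. f1 x - f2 x + c * f3 x)"
  using assms by (simp add: integral_add integral_diff integrable_diff int_cmul)

lemma energy_comp:
  fixes p q t \<epsilon> n :: real and w :: "real \<Rightarrow> real \<Rightarrow> real"
  assumes pq: "p \<le> q" and t: "t > 0" and n: "n \<le> 2"
  and cw: "continuous_on ({p..q} \<times> {0..}) (\<lambda>(x,t). w x t)"
  and pos: "\<forall>x\<in>{p..q}. \<forall>t\<ge>0. w x t > 0"
  and dt: "\<forall>x\<in>{p..q}. \<forall>t>0. ((\<lambda>s. w x s) has_real_derivative pdt w x t) (at t)"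
  and cdt: "continuous_on ({p..q} \<times> {0<..}) (\<lambda>(x,t). pdt w x t)"
  shows "((\<lambda>s. integral {p..q} (\<lambda>x. w x s * ln (w x s)) - integral {p..q} (\<lambda>x. w x s)
            + \<epsilon> / ((3 - n) * (4 - n)) * integral {p..q} (\<lambda>x. 1 / w x s powr (3 - n)))
        has_real_derivative integral {p..q} (\<lambda>x. (ln (w x t) - \<epsilon>/(4-n) * w x t powr (n-4)) * pdt w x t)) (at t)"
proof -
  have d1: "\<forall>y>0. ((\<lambda>y. y * ln y) has_real_derivative ln y + 1) (at y)"
  proof (intro allI impI)
    fix y :: real assume y: "y > 0"
    show "((\<lambda>y. y * ln y) has_real_derivative ln y + 1) (at y)"
      by (rule DERIV_cong[OF DERIV_mult[OF DERIV_ident DERIV_ln[OF y]]]) (use y in simp)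
  qed
  have d2: "\<forall>y>0. ((\<lambda>y. y) has_real_derivative 1) (at y)" by (simp add: DERIV_ident)
  have d3: "\<forall>y>0. ((\<lambda>y. 1 / y powr (3 - n)) has_real_derivative (n - 3) * y powr (n - 4)) (at y)"
  proof (intro allI impI)
    fix y :: real assume y: "y > 0"
    have "((\<lambda>y. y powr (n - 3)) has_real_derivative (n - 3) * y powr (n - 3 - 1)) (at y)"
      by (rule has_real_derivative_powr[OF y])
    then have "((\<lambda>y. y powr (n - 3)) has_real_derivative (n - 3) * y powr (n - 4)) (at y)" by simp
    then show "((\<lambda>y. 1 / y powr (3 - n)) has_real_derivative (n - 3) * y powr (n - 4)) (at y)"
      by (rule has_field_derivative_transform_within_open[where S="{0<..}"])
         (use y in \<open>auto simp: powr_minus_divide[symmetric]\<close>)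
  qed
  have c1: "continuous_on {0<..} (\<lambda>y::real. ln y + 1)" by (intro continuous_intros) auto
  have c2: "continuous_on {0<..} (\<lambda>y::real. 1::real)" by (intro continuous_intros)
  have c3: "continuous_on {0<..} (\<lambda>y::real. (n - 3) * y powr (n - 4))" by (intro continuous_intros) auto
  note l1 = leib[OF pq t cw pos dt cdt d1 c1]
  note l2 = leib[OF pq t cw pos dt cdt d2 c2]
  note l3 = leib[OF pq t cw pos dt cdt d3 c3]
  have ct: "continuous_on {p..q} (\<lambda>x. w x t)" using cont_slice[OF cw] t by simp
  have cdt_t: "continuous_on {p..q} (\<lambda>x. pdt w x t)" using cont_slice[OF cdt] t by simp
  have nz: "\<forall>x\<in>{p..q}. w x t \<noteq> 0" using pos t by (metis less_irrefl less_imp_le)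
  have i1: "(\<lambda>x. (ln (w x t) + 1) * pdt w x t) integrable_on {p..q}"
    by (intro integrable_continuous_interval continuous_intros ct cdt_t nz)
  have i2: "(\<lambda>x. 1 * pdt w x t) integrable_on {p..q}"
    by (intro integrable_continuous_interval continuous_intros ct cdt_t nz)
  have i3: "(\<lambda>x. (n - 3) * w x t powr (n - 4) * pdt w x t) integrable_on {p..q}"
    by (intro integrable_continuous_interval continuous_intros ct cdt_t nz)
  have eq: "integral {p..q} (\<lambda>x. (ln (w x t) + 1) * pdt w x t) - integral {p..q} (\<lambda>x. 1 * pdt w x t)
     + \<epsilon> / ((3 - n) * (4 - n)) * integral {p..q} (\<lambda>x. (n - 3) * w x t powr (n - 4) * pdt w x t)
     = integral {p..q} (\<lambda>x. (ln (w x t) - \<epsilon>/(4-n) * w x t powr (n-4)) * pdt w x t)"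
  proof -
    have "integral {p..q} (\<lambda>x. (ln (w x t) + 1) * pdt w x t) - integral {p..q} (\<lambda>x. 1 * pdt w x t)
     + \<epsilon> / ((3 - n) * (4 - n)) * integral {p..q} (\<lambda>x. (n - 3) * w x t powr (n - 4) * pdt w x t)
     = integral {p..q} (\<lambda>x. (ln (w x t) + 1) * pdt w x t - 1 * pdt w x t
          + \<epsilon> / ((3 - n) * (4 - n)) * ((n - 3) * w x t powr (n - 4) * pdt w x t))"
      by (rule integral_lin3[OF i1 i2 i3])
    also have "\<dots> = integral {p..q} (\<lambda>x. (ln (w x t) - \<epsilon>/(4-n) * w x t powr (n-4)) * pdt w x t)"
    proof (rule integral_cong)
      fix x
      have n3: "3 - n \<noteq> 0" "4 - n \<noteq> 0" using n by auto
      have k: "\<epsilon> / ((3 - n) * (4 - n)) * (n - 3) = - (\<epsilon> / (4 - n))"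
      proof -
        have g: "\<And>a b e::real. a \<noteq> 0 \<Longrightarrow> b \<noteq> 0 \<Longrightarrow> e / (a * b) * (- a) = - (e / b)"
          by (simp add: field_simps)
        have "n - 3 = - (3 - n)" by simp
        then show ?thesis using g[OF n3] by simp
      qed
      have k2: "\<epsilon> / ((3 - n) * (4 - n)) * ((n - 3) * w x t powr (n - 4) * pdt w x t)
         = (\<epsilon> / ((3 - n) * (4 - n)) * (n - 3)) * w x t powr (n - 4) * pdt w x t" by (simp only: mult.assoc)
      show "(ln (w x t) + 1) * pdt w x t - 1 * pdt w x t
          + \<epsilon> / ((3 - n) * (4 - n)) * ((n - 3) * w x t powr (n - 4) * pdt w x t)
          = (ln (w x t) - \<epsilon>/(4-n) * w x t powr (n-4)) * pdt w x t"
        unfolding k2 k by (simp add: algebra_simps)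
    qed
    finally show ?thesis .
  qed
  show ?thesis
    using DERIV_add[OF DERIV_diff[OF l1 l2] DERIV_cmult[OF l3, of "\<epsilon> / ((3 - n) * (4 - n))"]] eq
    by simp
qed

lemma slice_facts:
  assumes C: "C41_on p q w" and cw: "continuous_on ({p..q} \<times> {0..}) (\<lambda>(x,t). w x t)" and t: "t > 0"
  shows "continuous_on {p..q} (\<lambda>x. w x t)"
   "continuous_on {p..q} (\<lambda>x. pdx p q w x t)"
   "continuous_on {p..q} (\<lambda>x. (pdx p q ^^ 2) w x t)"
   "continuous_on {p..q} (\<lambda>x. (pdx p q ^^ 3) w x t)"
   "continuous_on {p..q} (\<lambda>x. pdt w x t)"
   "\<forall>x\<in>{p..q}. ((\<lambda>y. w y t) has_real_derivative pdx p q w x t) (at x within {p..q})"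
   "\<forall>x\<in>{p..q}. ((\<lambda>y. pdx p q w y t) has_real_derivative (pdx p q ^^ 2) w x t) (at x within {p..q})"
   "\<forall>x\<in>{p..q}. ((\<lambda>y. (pdx p q ^^ 2) w y t) has_real_derivative (pdx p q ^^ 3) w x t) (at x within {p..q})"
proof -
  have D: "\<forall>k<4. \<forall>x\<in>{p..q}. \<forall>t>0. ((\<lambda>y. (pdx p q ^^ k) w y t) has_real_derivative ((pdx p q ^^ Suc k) w x t))
          (at x within {p..q})"
   and CC: "\<forall>k\<le>4. continuous_on ({p..q} \<times> {0<..}) (\<lambda>(x,t). (pdx p q ^^ k) w x t)"
   and CT: "continuous_on ({p..q} \<times> {0<..}) (\<lambda>(x,t). pdt w x t)"
    using C unfolding C41_on_def by auto
  have D': "\<And>k x. k < 4 \<Longrightarrow> x \<in> {p..q} \<Longrightarrow> ((\<lambda>y. (pdx p q ^^ k) w y t) has_real_derivative ((pdx p q ^^ Suc k) w x t))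
          (at x within {p..q})" using D t by blast
  have tt: "t \<in> {0<..}" using t by simp
  show "continuous_on {p..q} (\<lambda>x. w x t)" using cont_slice[OF cw] t by simp
  have "continuous_on ({p..q} \<times> {0<..}) (\<lambda>(x,t). (pdx p q ^^ 1) w x t)" using CC[rule_format, of 1] by simp
  then show "continuous_on {p..q} (\<lambda>x. pdx p q w x t)" using cont_slice[OF _ tt] by simp
  have "continuous_on ({p..q} \<times> {0<..}) (\<lambda>(x,t). (pdx p q ^^ 2) w x t)" using CC[rule_format, of 2] by simp
  then show "continuous_on {p..q} (\<lambda>x. (pdx p q ^^ 2) w x t)" using cont_slice[OF _ tt] by simp
  have "continuous_on ({p..q} \<times> {0<..}) (\<lambda>(x,t). (pdx p q ^^ 3) w x t)" using CC[rule_format, of 3] by simp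
  then show "continuous_on {p..q} (\<lambda>x. (pdx p q ^^ 3) w x t)" using cont_slice[OF _ tt] by simp
  show "continuous_on {p..q} (\<lambda>x. pdt w x t)" using cont_slice[OF CT tt] by simp
  have "\<forall>x\<in>{p..q}. ((\<lambda>y. (pdx p q ^^ 0) w y t) has_real_derivative (pdx p q ^^ Suc 0) w x t) (at x within {p..q})"
    using D'[of 0] by auto
  then show "\<forall>x\<in>{p..q}. ((\<lambda>y. w y t) has_real_derivative pdx p q w x t) (at x within {p..q})"
    by simp
  have "\<forall>x\<in>{p..q}. ((\<lambda>y. (pdx p q ^^ 1) w y t) has_real_derivative (pdx p q ^^ Suc 1) w x t) (at x within {p..q})"
    using D'[of 1] by auto
  then show "\<forall>x\<in>{p..q}. ((\<lambda>y. pdx p q w y t) has_real_derivative (pdx p q ^^ 2) w x t) (at x within {p..q})"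
    by (simp add: numeral_2_eq_2)
  have "\<forall>x\<in>{p..q}. ((\<lambda>y. (pdx p q ^^ 2) w y t) has_real_derivative (pdx p q ^^ Suc 2) w x t) (at x within {p..q})"
    using D'[of 2] by auto
  then show "\<forall>x\<in>{p..q}. ((\<lambda>y. (pdx p q ^^ 2) w y t) has_real_derivative (pdx p q ^^ 3) w x t) (at x within {p..q})"
    by (simp add: numeral_3_eq_3)
qed
lemma int_pos:
  fixes W :: "real \<Rightarrow> real"
  assumes pq: "p < q" and pos: "\<forall>x\<in>{p..q}. W x > 0" and cW: "continuous_on {p..q} W"
  shows "integral {p..q} W > 0"
proof -
  obtain x0 where x0: "x0 \<in> {p..q}" and mn: "\<forall>y\<in>{p..q}. W x0 \<le> W y"
    using continuous_attains_inf[OF compact_Icc _ cW] pq by auto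
  have "integral {p..q} (\<lambda>_. W x0) \<le> integral {p..q} W"
    by (rule integral_le[OF _ integrable_continuous_interval[OF cW]]) (use mn in auto)
  then have "W x0 * (q - p) \<le> integral {p..q} W" using pq by (simp add: mult.commute)
  moreover have "W x0 * (q - p) > 0" using pos x0 pq by simp
  ultimately show ?thesis by linarith
qed

lemma integral_affine:
  fixes f :: "real \<Rightarrow> real"
  assumes "p \<le> q" "f integrable_on {p..q}"
  shows "integral {p..q} (\<lambda>x. c + d * f x) = c * (q - p) + d * integral {p..q} f"
proof -
  have "integral {p..q} (\<lambda>x. c + d * f x) = integral {p..q} (\<lambda>x. c) + integral {p..q} (\<lambda>x. d * f x)"
    by (rule integral_add) (auto intro: int_cmul assms(2))
  then show ?thesis using assms(1) by (simp add: mult.commute)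
qed



lemma final_alg:
  fixes Au Ju Iu Ku RU X Av Jv Iv Kv RV \<epsilon> D1 D2 chi1 chi2 CA KV W :: real
  assumes IU: "Au + \<epsilon> * Ju + D1 * Iu + D1 * \<epsilon> * Ku \<le> RU + chi1 * X"
  and IV: "Av + \<epsilon> * Jv + D2 * Iv + D2 * \<epsilon> * Kv \<le> RV + (- chi2) * X"
  and c1: "chi1 > 0" and c2: "chi2 > 0" and Iv: "Iv \<ge> 0" and D2: "D2 > 0"
  and A: "RU - D1 / 2 * Iu \<le> CA * W" and B: "RV \<le> KV * W"
  shows "Au + chi1 / chi2 * Av + (D1 / 2 * Iu + \<epsilon> * Ju + D1 * \<epsilon> * Ku + chi1 * D2 / (2 * chi2) * Iv
      + chi1 * \<epsilon> / chi2 * Jv + chi1 * D2 * \<epsilon> / chi2 * Kv) \<le> CA * W + chi1 / chi2 * (KV * W)"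
proof -
  define k where "k = chi1 / chi2"
  have k: "k \<ge> 0" using c1 c2 by (simp add: k_def)
  have kc: "k * chi2 = chi1" using c2 by (simp add: k_def)
  have m: "k * (Av + \<epsilon> * Jv + D2 * Iv + D2 * \<epsilon> * Kv) \<le> k * (RV + (- chi2) * X)"
    using IV k by (rule mult_left_mono)
  have m2: "k * RV \<le> k * (KV * W)" using B k by (rule mult_left_mono)
  have m3: "0 \<le> k * (D2 * Iv)" using k D2 Iv by simp
  have e1: "chi1 * D2 / (2 * chi2) * Iv = k * (D2 * Iv) / 2" by (simp add: k_def)
  have e2: "chi1 * \<epsilon> / chi2 * Jv = k * (\<epsilon> * Jv)" by (simp add: k_def)
  have e3: "chi1 * D2 * \<epsilon> / chi2 * Kv = k * (D2 * \<epsilon> * Kv)" by (simp add: k_def)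
  have e4: "k * (Av + \<epsilon> * Jv + D2 * Iv + D2 * \<epsilon> * Kv) = k * Av + k * (\<epsilon> * Jv) + k * (D2 * Iv) + k * (D2 * \<epsilon> * Kv)"
    by (simp add: algebra_simps)
  have e5: "k * (RV + (- chi2) * X) = k * RV - chi1 * X" using kc by (simp add: algebra_simps)
  show ?thesis unfolding e1 e2 e3 k_def[symmetric] using IU m m2 m3 e4 e5 A by linarith
qed
lemma boundA:
  fixes W W1 Z :: "real \<Rightarrow> real" and p q \<epsilon> n lam a D :: real
  assumes pq: "p < q" and pos: "\<forall>x\<in>{p..q}. W x > 0" and posZ: "\<forall>x\<in>{p..q}. Z x > 0"
    and cW: "continuous_on {p..q} W" and cW1: "continuous_on {p..q} W1" and cZ: "continuous_on {p..q} Z"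
    and dW: "\<forall>x\<in>{p..q}. (W has_real_derivative W1 x) (at x within {p..q})"
    and e: "0 < \<epsilon>" "\<epsilon> < 1" and n: "1 \<le> n" "n \<le> 2" and lam: "lam > 0" and a: "a > 0" and D: "D > 0"
  shows "integral {p..q} (\<lambda>x. (ln (W x) - \<epsilon>/(4-n) * W x powr (n-4)) * (3 * W x ^ 3 / (3 * W x ^ 2 + \<epsilon>) * (lam - W x + a * Z x)))
      - D / 2 * integral {p..q} (\<lambda>x. (W1 x)^2 / W x)
    \<le> ((4 + lam^3) * (q - p) + (D / (4 * (q-p)^2) + 2 * (2*a)^2 / ((q-p) * D) + 4 * (2*a)^4 / D^3))
        * (1 + (integral {p..q} W)^7 + (integral {p..q} Z)^7)"
proof -
  define L where "L = q - p"
  have L: "L > 0" using pq by (simp add: L_def)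
  define U where "U = integral {p..q} W"
  define V where "V = integral {p..q} Z"
  define I where "I = integral {p..q} (\<lambda>x. (W1 x)^2 / W x)"
  define S where "S = integral {p..q} (\<lambda>x. \<bar>W1 x\<bar>)"
  define B where "B = U / L + S"
  have U: "U > 0" unfolding U_def by (rule int_pos[OF pq pos cW])
  have V: "V > 0" unfolding V_def by (rule int_pos[OF pq posZ cZ])
  have Wnz: "\<forall>x\<in>{p..q}. W x \<noteq> 0" using pos by (metis less_irrefl)
  have I: "I \<ge> 0" unfolding I_def
    by (rule integral_nonneg) (auto intro!: integrable_continuous_interval continuous_intros cW cW1 Wnz divide_nonneg_pos simp: pos)
  have S: "S \<ge> 0" unfolding S_def
    by (rule integral_nonneg) (auto intro!: integrable_continuous_interval continuous_intros cW1)
  have Ssq: "S^2 \<le> U * I" unfolding S_def U_def I_def by (rule S_sq_bound[OF pq pos cW cW1])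
  have sb: "W x \<le> B" if "x \<in> {p..q}" for x
    using sup_bound[OF pq cW dW cW1 that] unfolding B_def U_def L_def S_def .
  have B: "B \<ge> 0" using U L S by (simp add: B_def)
  have dnz: "\<forall>x\<in>{p..q}. 3 * W x ^ 2 + \<epsilon> \<noteq> 0" using pos e
    by (metis add_pos_pos less_irrefl mult_pos_pos zero_less_numeral zero_less_power)
  have pw: "(ln (W x) - \<epsilon>/(4-n) * W x powr (n-4)) * (3 * W x ^ 3 / (3 * W x ^ 2 + \<epsilon>) * (lam - W x + a * Z x))
      \<le> (4 + lam^3) + (2 * a * (B * sqrt B)) * Z x" if x: "x \<in> {p..q}" for x
  proof -
    have wx: "W x > 0" and zx: "Z x > 0" using pos posZ x by auto
    have "(ln (W x) - \<epsilon>/(4-n) * W x powr (n-4)) * (3 * W x ^ 3 / (3 * W x ^ 2 + \<epsilon>) * (lam - W x + a * Z x))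
      \<le> 4 + lam^3 + 2 * a * Z x * (W x * sqrt (W x))" by (rule PB_u[OF wx zx e n lam a])
    also have "2 * a * Z x * (W x * sqrt (W x)) \<le> 2 * a * Z x * (B * sqrt B)"
    proof (rule mult_left_mono)
      show "W x * sqrt (W x) \<le> B * sqrt B"
        using sb[OF x] wx B by (intro mult_mono real_sqrt_le_mono) auto
      show "0 \<le> 2 * a * Z x" using a zx by simp
    qed
    finally show ?thesis by (simp add: algebra_simps)
  qed
  have i1: "(\<lambda>x. (ln (W x) - \<epsilon>/(4-n) * W x powr (n-4)) * (3 * W x ^ 3 / (3 * W x ^ 2 + \<epsilon>) * (lam - W x + a * Z x)))
      integrable_on {p..q}"
    by (intro integrable_continuous_interval continuous_intros cW cZ Wnz dnz)
  have iZ: "Z integrable_on {p..q}" by (rule integrable_continuous_interval[OF cZ])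
  have "integral {p..q} (\<lambda>x. (ln (W x) - \<epsilon>/(4-n) * W x powr (n-4)) * (3 * W x ^ 3 / (3 * W x ^ 2 + \<epsilon>) * (lam - W x + a * Z x)))
      \<le> integral {p..q} (\<lambda>x. (4 + lam^3) + (2 * a * (B * sqrt B)) * Z x)"
    by (rule integral_le[OF i1]) (use pw in \<open>auto intro!: integrable_continuous_interval continuous_intros cZ\<close>)
  also have "\<dots> = (4 + lam^3) * L + (2 * a * (B * sqrt B)) * V"
    unfolding L_def V_def using pq by (intro integral_affine iZ) auto
  finally have R1: "integral {p..q} (\<lambda>x. (ln (W x) - \<epsilon>/(4-n) * W x powr (n-4)) * (3 * W x ^ 3 / (3 * W x ^ 2 + \<epsilon>) * (lam - W x + a * Z x)))
      \<le> (4 + lam^3) * L + (2 * a) * V * (B * sqrt B)" by (simp add: algebra_simps)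
  have KR': "(2 * a) * V * (B * sqrt B) \<le> D / 2 * I + (D / (4 * L^2) + 2 * (2*a)^2 / (L * D) + 4 * (2*a)^4 / D^3) * (1 + U^7 + V^7)"
    unfolding B_def using KR[OF U less_imp_le[OF V] I S Ssq L _ D, of "2*a"] a by simp
  define KK where "KK = D / (4 * L^2) + 2 * (2*a)^2 / (L * D) + 4 * (2*a)^4 / D^3"
  have Wge: "1 + U^7 + V^7 \<ge> 1" using U V by simp
  have c0: "(4 + lam^3) * L \<ge> 0" using lam L by simp
  have "(4 + lam^3) * L \<le> (4 + lam^3) * L * (1 + U^7 + V^7)"
    using mult_left_mono[OF Wge c0] by simp
  then have fin: "integral {p..q} (\<lambda>x. (ln (W x) - \<epsilon>/(4-n) * W x powr (n-4)) * (3 * W x ^ 3 / (3 * W x ^ 2 + \<epsilon>) * (lam - W x + a * Z x)))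
      - D / 2 * I \<le> ((4 + lam^3) * L + KK) * (1 + U^7 + V^7)"
    using R1 KR' unfolding KK_def by (simp add: algebra_simps)
  show ?thesis using fin unfolding KK_def L_def U_def V_def I_def .
qed

lemma boundB:
  fixes W Z :: "real \<Rightarrow> real" and p q \<epsilon> n lam a :: real
  assumes pq: "p < q" and pos: "\<forall>x\<in>{p..q}. W x > 0" and posZ: "\<forall>x\<in>{p..q}. Z x > 0"
    and cW: "continuous_on {p..q} W" and cZ: "continuous_on {p..q} Z"
    and e: "0 < \<epsilon>" "\<epsilon> < 1" and n: "1 \<le> n" "n \<le> 2" and lam: "lam > 0" and a: "a > 0"
  shows "integral {p..q} (\<lambda>x. (ln (W x) - \<epsilon>/(4-n) * W x powr (n-4)) * (3 * W x ^ 3 / (3 * W x ^ 2 + \<epsilon>) * (lam - W x - a * Z x)))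
    \<le> ((4 + lam^3 + 4*a) * ((q - p) + 1)) * (1 + (integral {p..q} Z)^7 + (integral {p..q} W)^7)"
proof -
  define K where "K = 4 + lam^3 + 4*a"
  have K: "K \<ge> 0" using lam a by (simp add: K_def)
  define U where "U = integral {p..q} Z"
  define V where "V = integral {p..q} W"
  have U: "U > 0" unfolding U_def by (rule int_pos[OF pq posZ cZ])
  have V: "V > 0" unfolding V_def by (rule int_pos[OF pq pos cW])
  have Wnz: "\<forall>x\<in>{p..q}. W x \<noteq> 0" using pos by (metis less_irrefl)
  have dnz: "\<forall>x\<in>{p..q}. 3 * W x ^ 2 + \<epsilon> \<noteq> 0" using pos e
    by (metis add_pos_pos less_irrefl mult_pos_pos zero_less_numeral zero_less_power)
  have i1: "(\<lambda>x. (ln (W x) - \<epsilon>/(4-n) * W x powr (n-4)) * (3 * W x ^ 3 / (3 * W x ^ 2 + \<epsilon>) * (lam - W x - a * Z x)))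
      integrable_on {p..q}"
    by (intro integrable_continuous_interval continuous_intros cW cZ Wnz dnz)
  have iZ: "Z integrable_on {p..q}" by (rule integrable_continuous_interval[OF cZ])
  have "integral {p..q} (\<lambda>x. (ln (W x) - \<epsilon>/(4-n) * W x powr (n-4)) * (3 * W x ^ 3 / (3 * W x ^ 2 + \<epsilon>) * (lam - W x - a * Z x)))
      \<le> integral {p..q} (\<lambda>x. K + K * Z x)"
  proof (rule integral_le[OF i1])
    show "(\<lambda>x. K + K * Z x) integrable_on {p..q}" by (intro integrable_continuous_interval continuous_intros cZ)
    fix x assume x: "x \<in> {p..q}"
    have wx: "W x > 0" and zx: "Z x > 0" using pos posZ x by auto
    show "(ln (W x) - \<epsilon>/(4-n) * W x powr (n-4)) * (3 * W x ^ 3 / (3 * W x ^ 2 + \<epsilon>) * (lam - W x - a * Z x)) \<le> K + K * Z x"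
      using PB_v[OF zx wx e n lam a] unfolding K_def by (simp add: algebra_simps)
  qed
  also have "\<dots> = K * (q - p) + K * U" unfolding U_def using pq by (intro integral_affine iZ) auto
  finally have R1: "integral {p..q} (\<lambda>x. (ln (W x) - \<epsilon>/(4-n) * W x powr (n-4)) * (3 * W x ^ 3 / (3 * W x ^ 2 + \<epsilon>) * (lam - W x - a * Z x)))
      \<le> K * (q - p) + K * U" .
  have Wge: "1 + U^7 + V^7 \<ge> 1" using U V by simp
  have Ule: "U \<le> 1 + U^7 + V^7"
  proof -
    have "U \<le> 1 + U^7" using pow_le17[of U 1] U by simp
    moreover have "V^7 > 0" using V by simp
    ultimately show ?thesis by linarith
  qed
  have "K * (q - p) + K * U \<le> K * ((q - p) * (1 + U^7 + V^7)) + K * (1 + U^7 + V^7)"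
  proof (intro add_mono mult_left_mono K)
    show "q - p \<le> (q - p) * (1 + U^7 + V^7)" using mult_left_mono[OF Wge, of "q - p"] pq by simp
    show "U \<le> 1 + U^7 + V^7" by (rule Ule)
  qed
  also have "\<dots> = (K * ((q - p) + 1)) * (1 + U^7 + V^7)" by (simp add: algebra_simps)
  finally show ?thesis using R1 unfolding K_def U_def V_def by linarith
qed
lemma main_t:
  fixes p q \<alpha> D1 D2 chi1 chi2 lam1 lam2 a1 a2 n1 n2 \<epsilon> t :: real
    and u v :: "real \<Rightarrow> real \<Rightarrow> real" and u0 v0 :: "real \<Rightarrow> real"
  assumes pq: "p < q" and D1: "D1 > 0" and D2: "D2 > 0" and a1: "a1 > 0" and a2: "a2 > 0"
    and l1: "lam1 > 0" and l2: "lam2 > 0" and n1: "1 \<le> n1" "n1 \<le> 2" and n2: "1 \<le> n2" "n2 \<le> 2"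
    and c1: "chi1 > 0" and c2: "chi2 > 0" and e: "0 < \<epsilon>" "\<epsilon> < 1"
    and sol: "approx_sol p q \<alpha> D1 D2 chi1 chi2 lam1 lam2 a1 a2 n1 n2 \<epsilon> u0 v0 u v"
    and t: "t > 0"
  shows "\<exists>F'. ((\<lambda>s. energyF p q chi1 chi2 n1 n2 \<epsilon> u v s) has_real_derivative F') (at t) \<and>
     F' + dissD p q D1 D2 chi1 chi2 n1 n2 \<epsilon> u v t
       \<le> ((4 + lam1^3) * (q - p) + (D1 / (4 * (q-p)^2) + 2 * (2*a1)^2 / ((q-p) * D1) + 4 * (2*a1)^4 / D1^3))
            * (1 + (integral {p..q} (\<lambda>x. u x t))^7 + (integral {p..q} (\<lambda>x. v x t))^7)
         + chi1 / chi2 * (((4 + lam2^3 + 4*a2) * ((q - p) + 1))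
            * (1 + (integral {p..q} (\<lambda>x. u x t))^7 + (integral {p..q} (\<lambda>x. v x t))^7))"
proof -
  note S = sol[unfolded approx_sol_def]
  have cu: "continuous_on ({p..q} \<times> {0..}) (\<lambda>(x,t). u x t)" using S by blast
  have cv: "continuous_on ({p..q} \<times> {0..}) (\<lambda>(x,t). v x t)" using S by blast
  have posu: "\<forall>x\<in>{p..q}. \<forall>t\<ge>0. u x t > 0" using S by blast
  have posv: "\<forall>x\<in>{p..q}. \<forall>t\<ge>0. v x t > 0" using S by blast
  have Cu: "C41_on p q u" and Cv: "C41_on p q v" using S by blast+
  note S6 = S[THEN conjunct2, THEN conjunct2, THEN conjunct2, THEN conjunct2, THEN conjunct2, THEN conjunct1]
  note S7 = S[THEN conjunct2, THEN conjunct2, THEN conjunct2, THEN conjunct2, THEN conjunct2, THEN conjunct2, THEN conjunct1]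
  note S8 = S[THEN conjunct2, THEN conjunct2, THEN conjunct2, THEN conjunct2, THEN conjunct2, THEN conjunct2, THEN conjunct2, THEN conjunct1]
  have bd: "pdx p q u p t = 0" "pdx p q u q t = 0" "pdx p q v p t = 0" "pdx p q v q t = 0"
    "(pdx p q ^^ 3) u p t = 0" "(pdx p q ^^ 3) u q t = 0" "(pdx p q ^^ 3) v p t = 0" "(pdx p q ^^ 3) v q t = 0"
    using S8 t by auto
  note SFu = slice_facts[OF Cu cu t]
  note SFv = slice_facts[OF Cv cv t]
  have pu: "\<forall>x\<in>{p..q}. u x t > 0" using posu t by auto
  have pv: "\<forall>x\<in>{p..q}. v x t > 0" using posv t by auto
  have unz: "\<forall>x\<in>{p..q}. u x t \<noteq> 0" using pu by (metis less_irrefl)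
  have vnz: "\<forall>x\<in>{p..q}. v x t \<noteq> 0" using pv by (metis less_irrefl)
  have dnz: "\<forall>x\<in>{p..q}. 3 * u x t ^ 2 + \<epsilon> \<noteq> 0" using pu e
    by (metis add_pos_pos less_irrefl mult_pos_pos zero_less_numeral zero_less_power)
  have dnzv: "\<forall>x\<in>{p..q}. 3 * v x t ^ 2 + \<epsilon> \<noteq> 0" using pv e
    by (metis add_pos_pos less_irrefl mult_pos_pos zero_less_numeral zero_less_power)
  have cRu: "continuous_on {p..q} (\<lambda>x. 3 * u x t ^ 3 / (3 * u x t ^ 2 + \<epsilon>) * (lam1 - u x t + a1 * v x t))"
    by (intro continuous_intros SFu(1) SFv(1) dnz)
  have cRv: "continuous_on {p..q} (\<lambda>x. 3 * v x t ^ 3 / (3 * v x t ^ 2 + \<epsilon>) * (lam2 - v x t - a2 * u x t))"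
    by (intro continuous_intros SFu(1) SFv(1) dnzv)
  have flu: "\<forall>x\<in>{p<..<q}. ((\<lambda>y. - \<epsilon> * (u y t ^ 4 / (u y t powr (4 - n1) + \<epsilon>)) * (pdx p q ^^ 3) u y t
              + \<epsilon> powr (\<alpha>/2) * u y t powr (-\<alpha>) * pdx p q u y t
              + D1 * pdx p q u y t
              - chi1 * (u y t powr (5 - n1) / (u y t powr (4 - n1) + \<epsilon>)) * pdx p q v y t)
          has_real_derivative
           (pdt u x t - 3 * u x t ^ 3 / (3 * u x t ^ 2 + \<epsilon>) * (lam1 - u x t + a1 * v x t)))
          (at x)" using S6 t by blast
  have flv: "\<forall>x\<in>{p<..<q}. ((\<lambda>y. - \<epsilon> * (v y t ^ 4 / (v y t powr (4 - n2) + \<epsilon>)) * (pdx p q ^^ 3) v y t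
              + \<epsilon> powr (\<alpha>/2) * v y t powr (-\<alpha>) * pdx p q v y t
              + D2 * pdx p q v y t
              - (- chi2) * (v y t powr (5 - n2) / (v y t powr (4 - n2) + \<epsilon>)) * pdx p q u y t)
          has_real_derivative
           (pdt v x t - 3 * v x t ^ 3 / (3 * v x t ^ 2 + \<epsilon>) * (lam2 - v x t - a2 * u x t)))
          (at x)"
  proof
    fix x assume x: "x \<in> {p<..<q}"
    have "((\<lambda>y. - \<epsilon> * (v y t ^ 4 / (v y t powr (4 - n2) + \<epsilon>)) * (pdx p q ^^ 3) v y t
              + \<epsilon> powr (\<alpha>/2) * v y t powr (-\<alpha>) * pdx p q v y t
              + D2 * pdx p q v y t
              + chi2 * (v y t powr (5 - n2) / (v y t powr (4 - n2) + \<epsilon>)) * pdx p q u y t)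
          has_real_derivative
           (pdt v x t - 3 * v x t ^ 3 / (3 * v x t ^ 2 + \<epsilon>) * (lam2 - v x t - a2 * u x t)))
          (at x)" using S7 t x by blast
    moreover have "(\<lambda>y. - \<epsilon> * (v y t ^ 4 / (v y t powr (4 - n2) + \<epsilon>)) * (pdx p q ^^ 3) v y t
              + \<epsilon> powr (\<alpha>/2) * v y t powr (-\<alpha>) * pdx p q v y t
              + D2 * pdx p q v y t
              - (- chi2) * (v y t powr (5 - n2) / (v y t powr (4 - n2) + \<epsilon>)) * pdx p q u y t)
       = (\<lambda>y. - \<epsilon> * (v y t ^ 4 / (v y t powr (4 - n2) + \<epsilon>)) * (pdx p q ^^ 3) v y t
              + \<epsilon> powr (\<alpha>/2) * v y t powr (-\<alpha>) * pdx p q v y t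
              + D2 * pdx p q v y t
              + chi2 * (v y t powr (5 - n2) / (v y t powr (4 - n2) + \<epsilon>)) * pdx p q u y t)"
      by (rule ext) simp
    ultimately show "((\<lambda>y. - \<epsilon> * (v y t ^ 4 / (v y t powr (4 - n2) + \<epsilon>)) * (pdx p q ^^ 3) v y t
              + \<epsilon> powr (\<alpha>/2) * v y t powr (-\<alpha>) * pdx p q v y t
              + D2 * pdx p q v y t
              - (- chi2) * (v y t powr (5 - n2) / (v y t powr (4 - n2) + \<epsilon>)) * pdx p q u y t)
          has_real_derivative
           (pdt v x t - 3 * v x t ^ 3 / (3 * v x t ^ 2 + \<epsilon>) * (lam2 - v x t - a2 * u x t)))
          (at x)" by simp
  qed
  note IU = comp_ineq[where p=p and q=q and \<epsilon>=\<epsilon> and n=n1 and \<alpha>=\<alpha> and D=D1 and chi=chi1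
      and W="\<lambda>x. u x t" and Wa="\<lambda>x. pdx p q u x t" and Wb="\<lambda>x. (pdx p q ^^ 2) u x t"
      and Wc="\<lambda>x. (pdx p q ^^ 3) u x t" and Wt="\<lambda>x. pdt u x t" and Za="\<lambda>x. pdx p q v x t"
      and R="\<lambda>x. 3 * u x t ^ 3 / (3 * u x t ^ 2 + \<epsilon>) * (lam1 - u x t + a1 * v x t)",
      OF pq e(1) n1 pu SFu(1-5) SFv(2) cRu SFu(6-8) flu bd(1,2,5,6,3,4)]
  note IV = comp_ineq[where p=p and q=q and \<epsilon>=\<epsilon> and n=n2 and \<alpha>=\<alpha> and D=D2 and chi="- chi2"
      and W="\<lambda>x. v x t" and Wa="\<lambda>x. pdx p q v x t" and Wb="\<lambda>x. (pdx p q ^^ 2) v x t"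
      and Wc="\<lambda>x. (pdx p q ^^ 3) v x t" and Wt="\<lambda>x. pdt v x t" and Za="\<lambda>x. pdx p q u x t"
      and R="\<lambda>x. 3 * v x t ^ 3 / (3 * v x t ^ 2 + \<epsilon>) * (lam2 - v x t - a2 * u x t)",
      OF pq e(1) n2 pv SFv(1-5) SFu(2) cRv SFv(6-8) flv bd(3,4,7,8,1,2)]
  have dtu: "\<forall>x\<in>{p..q}. \<forall>t>0. ((\<lambda>s. u x s) has_real_derivative pdt u x t) (at t)"
    and cdtu: "continuous_on ({p..q} \<times> {0<..}) (\<lambda>(x,t). pdt u x t)" using Cu unfolding C41_on_def by blast+
  have dtv: "\<forall>x\<in>{p..q}. \<forall>t>0. ((\<lambda>s. v x s) has_real_derivative pdt v x t) (at t)"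
    and cdtv: "continuous_on ({p..q} \<times> {0<..}) (\<lambda>(x,t). pdt v x t)" using Cv unfolding C41_on_def by blast+
  note EU = energy_comp[where \<epsilon>=\<epsilon>, OF less_imp_le[OF pq] t n1(2) cu posu dtu cdtu]
  note EV = energy_comp[where \<epsilon>=\<epsilon>, OF less_imp_le[OF pq] t n2(2) cv posv dtv cdtv]
  have ef: "(\<lambda>s. energyF p q chi1 chi2 n1 n2 \<epsilon> u v s) = (\<lambda>s.
      (integral {p..q} (\<lambda>x. u x s * ln (u x s)) - integral {p..q} (\<lambda>x. u x s)
            + \<epsilon> / ((3 - n1) * (4 - n1)) * integral {p..q} (\<lambda>x. 1 / u x s powr (3 - n1)))
     + chi1 / chi2 * (integral {p..q} (\<lambda>x. v x s * ln (v x s)) - integral {p..q} (\<lambda>x. v x s)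
            + \<epsilon> / ((3 - n2) * (4 - n2)) * integral {p..q} (\<lambda>x. 1 / v x s powr (3 - n2))))"
    by (rule ext) (simp add: energyF_def algebra_simps)
  have dF: "((\<lambda>s. energyF p q chi1 chi2 n1 n2 \<epsilon> u v s) has_real_derivative
      integral {p..q} (\<lambda>x. (ln (u x t) - \<epsilon>/(4-n1) * u x t powr (n1-4)) * pdt u x t)
      + chi1 / chi2 * integral {p..q} (\<lambda>x. (ln (v x t) - \<epsilon>/(4-n2) * v x t powr (n2-4)) * pdt v x t)) (at t)"
    unfolding ef by (rule DERIV_add[OF EU DERIV_cmult[OF EV]])
  have xs: "integral {p..q} (\<lambda>x. pdx p q v x t * pdx p q u x t) = integral {p..q} (\<lambda>x. pdx p q u x t * pdx p q v x t)"
    by (simp add: mult.commute)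
  note IV' = IV[unfolded xs]
  have Iv: "0 \<le> integral {p..q} (\<lambda>x. (pdx p q v x t)^2 / v x t)"
    by (rule integral_nonneg) (auto intro!: integrable_continuous_interval continuous_intros SFv(1,2) vnz divide_nonneg_pos simp: pv)
  note A = boundA[OF pq pu pv SFu(1) SFu(2) SFv(1) SFu(6) e n1 l1 a1 D1]
  note B = boundB[OF pq pv pu SFv(1) SFu(1) e n2 l2 a2]
  show ?thesis
    apply (rule exI, rule conjI, rule dF)
    unfolding dissD_def
    by (rule final_alg[OF IU IV' c1 c2 Iv D2 A B])
qed
theorem lemma3p2:
  fixes p q \<alpha> D1 D2 a1 a2 lam1 lam2 n1 n2 :: real
  assumes "p < q" and "0 < \<alpha>" and "\<alpha> \<le> 1/2"
    and "D1 > 0" and "D2 > 0" and "a1 > 0" and "a2 > 0" and "lam1 > 0" and "lam2 > 0"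
    and "1 \<le> n1" and "n1 \<le> 2" and "1 \<le> n2" and "n2 \<le> 2"
  shows "\<exists>C>0. \<forall>\<chi>1 \<chi>2 :: real. \<forall>u0 v0 :: real \<Rightarrow> real. \<forall>u0e v0e :: real \<Rightarrow> real \<Rightarrow> real.
     \<chi>1 > 0 \<longrightarrow> \<chi>2 > 0 \<longrightarrow> IE_comp p q u0 u0e \<longrightarrow> IE_comp p q v0 v0e \<longrightarrow>
     (\<forall>\<epsilon>\<in>{0<..<1}. \<forall>u v :: real \<Rightarrow> real \<Rightarrow> real.
        approx_sol p q \<alpha> D1 D2 \<chi>1 \<chi>2 lam1 lam2 a1 a2 n1 n2 \<epsilon> (u0e \<epsilon>) (v0e \<epsilon>) u v \<longrightarrow>
        (\<forall>t>0. \<exists>F'. ((\<lambda>s. energyF p q \<chi>1 \<chi>2 n1 n2 \<epsilon> u v s) has_real_derivative F') (at t) \<and>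
           F' + dissD p q D1 D2 \<chi>1 \<chi>2 n1 n2 \<epsilon> u v t
             \<le> C * (1 + \<chi>1 / \<chi>2) * (1 + (integral {p..q} (\<lambda>x. u x t)) ^ 7
                                        + (integral {p..q} (\<lambda>x. v x t)) ^ 7)))"

proof -
  define CA where "CA = (4 + lam1^3) * (q - p) + (D1 / (4 * (q-p)^2) + 2 * (2*a1)^2 / ((q-p) * D1) + 4 * (2*a1)^4 / D1^3)"
  define KV where "KV = (4 + lam2^3 + 4*a2) * ((q - p) + 1)"
  have pq: "p < q" and D1: "D1 > 0" and D2: "D2 > 0" and a1: "a1 > 0" and a2: "a2 > 0"
    and l1: "lam1 > 0" and l2: "lam2 > 0" and n1: "1 \<le> n1" "n1 \<le> 2" and n2: "1 \<le> n2" "n2 \<le> 2"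
    using assms by auto
  have CA: "CA > 0" unfolding CA_def using pq D1 a1 l1
    by (intro add_pos_nonneg add_nonneg_nonneg mult_pos_pos add_pos_pos) auto
  have KV: "KV > 0" unfolding KV_def using pq l2 a2 by (intro mult_pos_pos add_pos_pos) auto
  show ?thesis
  proof (rule exI[of _ "CA + KV"], intro conjI allI impI ballI)
    show "CA + KV > 0" using CA KV by simp
    fix chi1 chi2 :: real and u0 v0 :: "real \<Rightarrow> real" and u0e v0e :: "real \<Rightarrow> real \<Rightarrow> real"
      and \<epsilon> :: real and u v :: "real \<Rightarrow> real \<Rightarrow> real" and t :: real
    assume c1: "chi1 > 0" and c2: "chi2 > 0" and "IE_comp p q u0 u0e" and "IE_comp p q v0 v0e"
      and e: "\<epsilon> \<in> {0<..<1}"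
      and sol: "approx_sol p q \<alpha> D1 D2 chi1 chi2 lam1 lam2 a1 a2 n1 n2 \<epsilon> (u0e \<epsilon>) (v0e \<epsilon>) u v"
      and t: "t > 0"
    have e': "0 < \<epsilon>" "\<epsilon> < 1" using e by auto
    obtain F' where dF: "((\<lambda>s. energyF p q chi1 chi2 n1 n2 \<epsilon> u v s) has_real_derivative F') (at t)"
      and le: "F' + dissD p q D1 D2 chi1 chi2 n1 n2 \<epsilon> u v t
       \<le> CA * (1 + (integral {p..q} (\<lambda>x. u x t))^7 + (integral {p..q} (\<lambda>x. v x t))^7)
         + chi1 / chi2 * (KV * (1 + (integral {p..q} (\<lambda>x. u x t))^7 + (integral {p..q} (\<lambda>x. v x t))^7))"
      using main_t[OF pq D1 D2 a1 a2 l1 l2 n1 n2 c1 c2 e' sol t] unfolding CA_def KV_def by blast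
    define W where "W = 1 + (integral {p..q} (\<lambda>x. u x t))^7 + (integral {p..q} (\<lambda>x. v x t))^7"
    define k where "k = chi1 / chi2"
    have k: "k \<ge> 0" using c1 c2 by (simp add: k_def)
    have W: "W \<ge> 0"
    proof -
      have pu: "\<forall>x\<in>{p..q}. u x t > 0" and pv: "\<forall>x\<in>{p..q}. v x t > 0"
        using sol t unfolding approx_sol_def by auto
      have cu: "continuous_on ({p..q} \<times> {0..}) (\<lambda>(x,t). u x t)" and cv: "continuous_on ({p..q} \<times> {0..}) (\<lambda>(x,t). v x t)"
        using sol unfolding approx_sol_def by auto
      have "integral {p..q} (\<lambda>x. u x t) > 0" by (rule int_pos[OF pq pu cont_slice[OF cu]]) (use t in simp)
      moreover have "integral {p..q} (\<lambda>x. v x t) > 0" by (rule int_pos[OF pq pv cont_slice[OF cv]]) (use t in simp)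
      ultimately show ?thesis unfolding W_def by simp
    qed
    have fin: "CA * W + k * (KV * W) \<le> (CA + KV) * (1 + k) * W"
    proof -
      have "0 \<le> KV * W + k * (CA * W)" using KV CA W k by simp
      moreover have "(CA + KV) * (1 + k) * W = CA * W + k * (KV * W) + (KV * W + k * (CA * W))"
        by (simp add: algebra_simps)
      ultimately show ?thesis by linarith
    qed
    show "\<exists>F'. ((\<lambda>s. energyF p q chi1 chi2 n1 n2 \<epsilon> u v s) has_real_derivative F') (at t) \<and>
           F' + dissD p q D1 D2 chi1 chi2 n1 n2 \<epsilon> u v t
             \<le> (CA + KV) * (1 + chi1 / chi2) * (1 + (integral {p..q} (\<lambda>x. u x t)) ^ 7
                                        + (integral {p..q} (\<lambda>x. v x t)) ^ 7)"
      using dF le fin unfolding W_def k_def by auto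
  qed
qed


end
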